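(* Let $P$ be the distribution of a random graph on node set $\mathbb{N}$ with Möbius parameter $Z$. Then $P$ is exchangeable if and only if there is a unique Borel probability measure $\mu$ on $\hat{\mathcal{U}}$ such that for every finite labeled graph $F$ with node set contained in $\mathbb{N}$, \[Z(F)=\int_{\hat{\mathcal{U}}}\rho([F])\,\mathrm{d}\mu(\rho).\]
   Context: All graphs are simple. $\mathcal{L}_n$ is the set of labeled simple graphs with node set $[n]$, $\mathcal{L}_\infty$ the set of simple graphs with node set $\mathbb{N}$; a random graph is a random element $G$ of $\mathcal{L}_\infty$. $G[n]$ is the subgraph induced by $[n]$; for $H\in\mathcal{L}_n$ and a permutation $\sigma$ of $[n]$, $H_\sigma$ is the relabeled graph ($i\sim j$ in $H$ iff $\sigma(i)\sim\sigma(j)$ in $H_\sigma$). $P$ is exchangeable if $P(G[n]=H)=P(G[n]=H_\sigma)$ for all $n$, $H\in\mathcal{L}_n$, $\sigma$. The Möbius parameter is $Z(F)=P(F\subseteq G)$ for finite labeled graphs $F$ with node set in $\mathbb{N}$, where $F\subseteq G$ means all edges of $F$ are edges of $G$. $\mathcal{U}$ is the set of isomorphism classes $[F]$ of finite simple graphs (including the empty graph $\emptyset$), which is an Abelian semigroup under node-disjoint union $+$ with neutral element $\emptyset$. A character is a function $\rho:\mathcal{U}\to\mathbb{R}$ with $\rho(s+t)=\rho(s)\rho(t)$ and $\rho(\emptyset)=1$; $\hat{\mathcal{U}}$ is the set of bounded characters, equipped with the topology of pointwise convergence on $\mathcal{U}$ (and its Borel $\sigma$-algebra). *)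

theory Defs
  imports "HOL-Analysis.Analysis" "HOL-Probability.Probability"
begin

definition edges_on :: "nat set \<Rightarrow> nat set set" where
  "edges_on V = {e. \<exists>i j. i \<in> V \<and> j \<in> V \<and> i \<noteq> j \<and> e = {i, j}}"

definition Linf :: "nat set set set" where
  "Linf = {G. G \<subseteq> edges_on UNIV}"

definition Linf_M :: "nat set set measure" where
  "Linf_M = sigma Linf {{G \<in> Linf. e \<in> G} | e. e \<in> edges_on UNIV}"

definition Ln :: "nat \<Rightarrow> nat set set set" where
  "Ln n = {H. H \<subseteq> edges_on {0..<n}}"

definition induced :: "nat set set \<Rightarrow> nat \<Rightarrow> nat set set" where
  "induced G n = {e \<in> G. e \<subseteq> {0..<n}}"

definition relabel :: "(nat \<Rightarrow> nat) \<Rightarrow> nat set set \<Rightarrow> nat set set" where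
  "relabel \<sigma> H = (\<lambda>e. \<sigma> ` e) ` H"

definition exchangeable :: "nat set set measure \<Rightarrow> bool" where
  "exchangeable P \<longleftrightarrow>
     (\<forall>n. \<forall>H \<in> Ln n. \<forall>\<sigma>. \<sigma> permutes {0..<n} \<longrightarrow>
        prob_space.prob P {G \<in> space P. induced G n = H}
        = prob_space.prob P {G \<in> space P. induced G n = relabel \<sigma> H})"

definition fgraphs :: "(nat set \<times> nat set set) set" where
  "fgraphs = {(V, E). finite V \<and> E \<subseteq> edges_on V}"

definition mobius_param :: "nat set set measure \<Rightarrow> nat set \<times> nat set set \<Rightarrow> real" where
  "mobius_param P F = measure P {G \<in> space P. snd F \<subseteq> G}"

definition iso_rel :: "((nat set \<times> nat set set) \<times> (nat set \<times> nat set set)) set" where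
  "iso_rel = {((V, E), (V', E')). (V, E) \<in> fgraphs \<and> (V', E') \<in> fgraphs \<and>
      (\<exists>f. bij_betw f V V' \<and> E' = (\<lambda>e. f ` e) ` E)}"

definition Ucl :: "(nat set \<times> nat set set) set set" where
  "Ucl = fgraphs // iso_rel"

definition iso_class :: "nat set \<times> nat set set \<Rightarrow> (nat set \<times> nat set set) set" where
  "iso_class F = iso_rel `` {F}"

definition empty_class :: "(nat set \<times> nat set set) set" where
  "empty_class = iso_class ({}, {})"

definition uplus :: "(nat set \<times> nat set set) set \<Rightarrow> (nat set \<times> nat set set) set
                     \<Rightarrow> (nat set \<times> nat set set) set" where
  "uplus s t = (THE u. \<exists>F\<in>s. \<exists>H\<in>t. fst F \<inter> fst H = {} \<and>
                        u = iso_class (fst F \<union> fst H, snd F \<union> snd H))"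

definition is_character :: "((nat set \<times> nat set set) set \<Rightarrow> real) \<Rightarrow> bool" where
  "is_character \<rho> \<longleftrightarrow> \<rho> empty_class = 1 \<and>
     (\<forall>s\<in>Ucl. \<forall>t\<in>Ucl. \<rho> (uplus s t) = \<rho> s * \<rho> t)"

definition Uhat :: "((nat set \<times> nat set set) set \<Rightarrow> real) set" where
  "Uhat = {\<rho> \<in> Ucl \<rightarrow>\<^sub>E UNIV. is_character \<rho> \<and> (\<exists>B. \<forall>s\<in>Ucl. \<bar>\<rho> s\<bar> \<le> B)}"

definition Uhat_top :: "((nat set \<times> nat set set) set \<Rightarrow> real) topology" where
  "Uhat_top = subtopology (product_topology (\<lambda>_. euclideanreal) Ucl) Uhat"

definition borel_of :: "'a topology \<Rightarrow> 'a measure" where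
  "borel_of X = sigma (topspace X) {U. openin X U}"

end

theory Submission
  imports Defs
begin

lemma edges_onD: "e \<in> edges_on V \<Longrightarrow> \<exists>i j. i \<in> V \<and> j \<in> V \<and> i \<noteq> j \<and> e = {i, j}"
  by (auto simp: edges_on_def)

lemma edges_on_subset: "e \<in> edges_on V \<Longrightarrow> e \<subseteq> V"
  by (auto simp: edges_on_def)

lemma edges_on_mono: "V \<subseteq> W \<Longrightarrow> edges_on V \<subseteq> edges_on W"
  by (auto simp: edges_on_def)

lemma edges_on_iff: "e \<in> edges_on V \<longleftrightarrow> e \<in> edges_on UNIV \<and> e \<subseteq> V"
  by (auto simp: edges_on_def)

lemma finite_edges_on: "finite V \<Longrightarrow> finite (edges_on V)"
proof -
  assume "finite V"
  have "edges_on V \<subseteq> Pow V" by (auto simp: edges_on_def)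
  then show ?thesis using \<open>finite V\<close> finite_subset by blast
qed

lemma relabel_comp: "relabel g (relabel f E) = relabel (g \<circ> f) E"
  by (auto simp: relabel_def image_comp)

lemma relabel_cong: "(\<And>x. x \<in> \<Union>E \<Longrightarrow> f x = g x) \<Longrightarrow> relabel f E = relabel g E"
  unfolding relabel_def by (rule image_cong) (auto intro!: image_cong)

lemma relabel_Un: "relabel f (A \<union> B) = relabel f A \<union> relabel f B"
  by (auto simp: relabel_def)

lemma relabel_id: "relabel id E = E" by (simp add: relabel_def)

lemma relabel_edges:
  assumes "E \<subseteq> edges_on V" "inj_on f V"
  shows "relabel f E \<subseteq> edges_on (f ` V)"
proof
  fix e' assume "e' \<in> relabel f E"
  then obtain e where e: "e \<in> E" "e' = f ` e" by (auto simp: relabel_def)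
  then obtain i j where "i \<in> V" "j \<in> V" "i \<noteq> j" "e = {i,j}" using assms(1) edges_onD by blast
  moreover have "f i \<noteq> f j" using assms(2) \<open>i \<in> V\<close> \<open>j \<in> V\<close> \<open>i \<noteq> j\<close> by (auto dest: inj_onD)
  ultimately show "e' \<in> edges_on (f ` V)" using e by (auto simp: edges_on_def)
qed

lemma Union_edges: "E \<subseteq> edges_on V \<Longrightarrow> \<Union>E \<subseteq> V"
  using edges_on_subset by blast

lemma fgraphsI: "finite V \<Longrightarrow> E \<subseteq> edges_on V \<Longrightarrow> (V, E) \<in> fgraphs"
  by (simp add: fgraphs_def)

lemma fgraphsD: "(V, E) \<in> fgraphs \<Longrightarrow> finite V \<and> E \<subseteq> edges_on V"
  by (simp add: fgraphs_def)

lemma iso_relI: "(V, E) \<in> fgraphs \<Longrightarrow> (V', E') \<in> fgraphs \<Longrightarrow> bij_betw f V V' \<Longrightarrow> E' = relabel f E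
   \<Longrightarrow> ((V, E), (V', E')) \<in> iso_rel"
  by (auto simp: iso_rel_def relabel_def)

lemma iso_relD: "((V, E), (V', E')) \<in> iso_rel \<Longrightarrow>
   (V, E) \<in> fgraphs \<and> (V', E') \<in> fgraphs \<and> (\<exists>f. bij_betw f V V' \<and> E' = relabel f E)"
  by (auto simp: iso_rel_def relabel_def)

lemma iso_rel_fgraphs: "iso_rel \<subseteq> fgraphs \<times> fgraphs"
  by (auto simp: iso_rel_def)

lemma iso_rel_refl: "F \<in> fgraphs \<Longrightarrow> (F, F) \<in> iso_rel"
  by (cases F) (auto intro!: iso_relI[where f=id] simp: relabel_id)

lemma iso_rel_sym: assumes "(F, F') \<in> iso_rel" shows "(F', F) \<in> iso_rel"
proof -
  obtain V E V' E' where FF: "F = (V, E)" "F' = (V', E')" by (cases F, cases F')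
  from iso_relD[OF assms[unfolded FF]] obtain f where
    f: "(V, E) \<in> fgraphs" "(V', E') \<in> fgraphs" "bij_betw f V V'" "E' = relabel f E" by blast
  define g where "g = the_inv_into V f"
  have g: "bij_betw g V' V" using f(3) by (simp add: g_def bij_betw_the_inv_into)
  have "relabel g E' = relabel (g \<circ> f) E" by (simp add: f(4) relabel_comp)
  also have "\<dots> = relabel id E"
    apply (rule relabel_cong)
    using f(1,3) Union_edges[of E V] fgraphsD[of V E]
    by (auto simp: g_def the_inv_into_f_f bij_betw_def)
  finally show ?thesis unfolding FF using f g by (intro iso_relI) (auto simp: relabel_id)
qed

lemma iso_rel_trans: assumes "(F, F') \<in> iso_rel" "(F', F'') \<in> iso_rel" shows "(F, F'') \<in> iso_rel"
proof -
  obtain V E V' E' V'' E'' where FF: "F = (V, E)" "F' = (V', E')" "F'' = (V'', E'')"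
    by (cases F, cases F', cases F'')
  from iso_relD[OF assms(1)[unfolded FF]] obtain f where
    f: "(V, E) \<in> fgraphs" "(V', E') \<in> fgraphs" "bij_betw f V V'" "E' = relabel f E" by blast
  from iso_relD[OF assms(2)[unfolded FF]] obtain g where
    g: "(V'', E'') \<in> fgraphs" "bij_betw g V' V''" "E'' = relabel g E'" by blast
  show ?thesis unfolding FF using f g
    by (intro iso_relI[where f="g \<circ> f"]) (auto intro: bij_betw_trans simp: relabel_comp)
qed

lemma equiv_iso: "equiv fgraphs iso_rel"
  unfolding equiv_def refl_on_def sym_def trans_def
  using iso_rel_fgraphs iso_rel_refl iso_rel_sym iso_rel_trans by blast

lemma iso_class_self: "F \<in> fgraphs \<Longrightarrow> F \<in> iso_class F"
  by (simp add: iso_class_def iso_rel_refl)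

lemma iso_class_in_Ucl: "F \<in> fgraphs \<Longrightarrow> iso_class F \<in> Ucl"
  by (simp add: Ucl_def iso_class_def quotientI)

lemma iso_class_eq: "(F, F') \<in> iso_rel \<Longrightarrow> iso_class F = iso_class F'"
  unfolding iso_class_def using equiv_iso equiv_class_eq by metis

lemma iso_class_eq_iff: "F \<in> fgraphs \<Longrightarrow> F' \<in> fgraphs \<Longrightarrow> iso_class F = iso_class F' \<longleftrightarrow> (F, F') \<in> iso_rel"
  unfolding iso_class_def using equiv_iso eq_equiv_class_iff by metis

lemma mem_iso_class: "F' \<in> iso_class F \<longleftrightarrow> (F, F') \<in> iso_rel"
  by (simp add: iso_class_def)

lemma Ucl_cases: "s \<in> Ucl \<Longrightarrow> \<exists>F\<in>fgraphs. s = iso_class F"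
  by (auto simp: Ucl_def quotient_def iso_class_def)

lemma Ucl_eq: "Ucl = iso_class ` fgraphs"
  by (auto simp: Ucl_def quotient_def iso_class_def)

lemma countable_fgraphs: "countable fgraphs"
proof -
  have "fgraphs \<subseteq> (\<Union>V\<in>{V::nat set. finite V}. {V} \<times> Pow (edges_on V))"
    by (auto simp: fgraphs_def)
  moreover have "countable (\<Union>V\<in>{V::nat set. finite V}. {V} \<times> Pow (edges_on V))"
    by (intro countable_UN countable_Collect_finite countable_finite)
       (auto simp: finite_edges_on)
  ultimately show ?thesis using countable_subset by blast
qed

lemma countable_Ucl: "countable Ucl"
  unfolding Ucl_eq using countable_fgraphs by simp


lemma fgraphs_union: "(V, E) \<in> fgraphs \<Longrightarrow> (W, D) \<in> fgraphs \<Longrightarrow> (V \<union> W, E \<union> D) \<in> fgraphs"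
  using edges_on_mono[of V "V \<union> W"] edges_on_mono[of W "V \<union> W"]
  by (auto simp: fgraphs_def)

lemma iso_union:
  assumes "((V1, E1), (V2, E2)) \<in> iso_rel" "((W1, D1), (W2, D2)) \<in> iso_rel"
    and "V1 \<inter> W1 = {}" "V2 \<inter> W2 = {}"
  shows "((V1 \<union> W1, E1 \<union> D1), (V2 \<union> W2, E2 \<union> D2)) \<in> iso_rel"
proof -
  from iso_relD[OF assms(1)] obtain f where
    f: "(V1, E1) \<in> fgraphs" "(V2, E2) \<in> fgraphs" "bij_betw f V1 V2" "E2 = relabel f E1" by blast
  from iso_relD[OF assms(2)] obtain g where
    g: "(W1, D1) \<in> fgraphs" "(W2, D2) \<in> fgraphs" "bij_betw g W1 W2" "D2 = relabel g D1" by blast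
  define h where "h x = (if x \<in> V1 then f x else g x)" for x
  have "bij_betw h V1 V2" using f(3) by (rule bij_betw_cong[THEN iffD1, rotated]) (simp add: h_def)
  moreover have "bij_betw h W1 W2" using g(3)
    by (rule bij_betw_cong[THEN iffD1, rotated]) (use assms(3) in \<open>auto simp: h_def\<close>)
  ultimately have hb: "bij_betw h (V1 \<union> W1) (V2 \<union> W2)" using assms(4) by (rule bij_betw_combine)
  have "relabel h E1 = relabel f E1"
    using Union_edges[of E1 V1] fgraphsD[OF f(1)] by (intro relabel_cong) (auto simp: h_def)
  moreover have "relabel h D1 = relabel g D1"
    using Union_edges[of D1 W1] fgraphsD[OF g(1)] assms(3) by (intro relabel_cong) (auto simp: h_def)
  ultimately show ?thesis
    using f g hb by (intro iso_relI[where f=h] fgraphs_union) (auto simp: relabel_Un)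
qed

lemma iso_inj_image:
  assumes "(V, E) \<in> fgraphs" "inj_on f V"
  shows "((V, E), (f ` V, relabel f E)) \<in> iso_rel"
  using assms fgraphsD[OF assms(1)] relabel_edges[of E V f]
  by (intro iso_relI[where f=f] fgraphsI) (auto simp: bij_betw_def)

lemma exists_disjoint_copy:
  assumes "F \<in> fgraphs" "finite A"
  shows "\<exists>F'. (F, F') \<in> iso_rel \<and> fst F' \<inter> A = {}"
proof -
  obtain V E where F: "F = (V, E)" by (cases F)
  obtain k where k: "A \<subseteq> {..<k}" using assms(2) finite_nat_bounded by blast
  have "inj_on ((+) k) V" by simp
  then have "(F, ((+) k ` V, relabel ((+) k) E)) \<in> iso_rel"
    using iso_inj_image assms(1) F by simp
  moreover have "(+) k ` V \<inter> A = {}" using k by auto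
  ultimately show ?thesis by (intro exI[of _ "((+) k ` V, relabel ((+) k) E)"]) auto
qed

lemma uplus_iso_class:
  assumes "F \<in> fgraphs" "H \<in> fgraphs" "fst F \<inter> fst H = {}"
  shows "uplus (iso_class F) (iso_class H) = iso_class (fst F \<union> fst H, snd F \<union> snd H)"
  unfolding uplus_def
proof (rule the_equality)
  show "\<exists>F'\<in>iso_class F. \<exists>H'\<in>iso_class H. fst F' \<inter> fst H' = {} \<and>
          iso_class (fst F \<union> fst H, snd F \<union> snd H) = iso_class (fst F' \<union> fst H', snd F' \<union> snd H')"
  proof (intro bexI conjI)
    show "F \<in> iso_class F" "H \<in> iso_class H" using assms by (auto intro: iso_class_self)
  qed (use assms in auto)
next
  fix u assume "\<exists>F'\<in>iso_class F. \<exists>H'\<in>iso_class H. fst F' \<inter> fst H' = {} \<and>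
          u = iso_class (fst F' \<union> fst H', snd F' \<union> snd H')"
  then obtain F' H' where FH: "(F, F') \<in> iso_rel" "(H, H') \<in> iso_rel" "fst F' \<inter> fst H' = {}"
     "u = iso_class (fst F' \<union> fst H', snd F' \<union> snd H')" by (auto simp: mem_iso_class)
  have "((fst F \<union> fst H, snd F \<union> snd H), (fst F' \<union> fst H', snd F' \<union> snd H')) \<in> iso_rel"
    using FH assms(3) by (intro iso_union) auto
  then show "u = iso_class (fst F \<union> fst H, snd F \<union> snd H)" using FH(4) iso_class_eq by metis
qed

lemma Ucl_disjoint_reps:
  assumes "s \<in> Ucl" "t \<in> Ucl"
  shows "\<exists>F H. F \<in> fgraphs \<and> H \<in> fgraphs \<and> s = iso_class F \<and> t = iso_class H \<and> fst F \<inter> fst H = {}"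
proof -
  obtain F where F: "F \<in> fgraphs" "s = iso_class F" using Ucl_cases assms(1) by blast
  obtain H0 where H0: "H0 \<in> fgraphs" "t = iso_class H0" using Ucl_cases assms(2) by blast
  have "finite (fst F)" using F(1) by (cases F) (auto dest: fgraphsD)
  then obtain H where H: "(H0, H) \<in> iso_rel" "fst H \<inter> fst F = {}"
    using exists_disjoint_copy[OF H0(1)] by blast
  have "H \<in> fgraphs" using H(1) iso_rel_fgraphs by blast
  moreover have "t = iso_class H" using H(1) H0(2) iso_class_eq by metis
  ultimately show ?thesis using F H by blast
qed

lemma uplus_in_Ucl: "s \<in> Ucl \<Longrightarrow> t \<in> Ucl \<Longrightarrow> uplus s t \<in> Ucl"
  using Ucl_disjoint_reps[of s t] uplus_iso_class iso_class_in_Ucl fgraphs_union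
  by (metis prod.collapse)

lemma empty_class_in_Ucl: "empty_class \<in> Ucl"
  unfolding empty_class_def by (rule iso_class_in_Ucl) (simp add: fgraphs_def)


lemma perm_extend:
  fixes V W :: "nat set" and f :: "nat \<Rightarrow> nat"
  assumes "V \<subseteq> {0..<n}" "W \<subseteq> {0..<n}" "bij_betw f V W"
  shows "\<exists>\<sigma>. \<sigma> permutes {0..<n} \<and> (\<forall>x\<in>V. \<sigma> x = f x)"
proof -
  have fin1: "finite V" using finite_subset[OF assms(1)] by simp
  have fin2: "finite W" using finite_subset[OF assms(2)] by simp
  note fin = fin1 fin2
  have "card V = card W" using assms(3) bij_betw_same_card by blast
  then have "card ({0..<n} - V) = card ({0..<n} - W)"
    using assms fin by (simp add: card_Diff_subset)
  then obtain g where g: "bij_betw g ({0..<n} - V) ({0..<n} - W)"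
    using finite_same_card_bij[of "{0..<n} - V" "{0..<n} - W"] by auto
  define \<sigma> where "\<sigma> x = (if x \<in> V then f x else if x \<in> {0..<n} then g x else x)" for x
  have "bij_betw \<sigma> V W" using assms(3) by (rule bij_betw_cong[THEN iffD1, rotated]) (simp add: \<sigma>_def)
  moreover have "bij_betw \<sigma> ({0..<n} - V) ({0..<n} - W)"
    using g by (rule bij_betw_cong[THEN iffD1, rotated]) (simp add: \<sigma>_def)
  ultimately have "bij_betw \<sigma> (V \<union> ({0..<n} - V)) (W \<union> ({0..<n} - W))"
    by (rule bij_betw_combine) auto
  moreover have "V \<union> ({0..<n} - V) = {0..<n}" "W \<union> ({0..<n} - W) = {0..<n}" using assms by auto
  ultimately have "bij_betw \<sigma> {0..<n} {0..<n}" by simp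
  then have "\<sigma> permutes {0..<n}" by (rule bij_imp_permutes) (use assms(1) in \<open>auto simp: \<sigma>_def\<close>)
  then show ?thesis by (auto simp: \<sigma>_def)
qed

lemma inj_image_fun: "inj f \<Longrightarrow> inj (\<lambda>e. f ` e)"
  by (simp add: inj_image_eq_iff inj_def)

lemma relabel_subset_iff: "inj f \<Longrightarrow> relabel f A \<subseteq> relabel f B \<longleftrightarrow> A \<subseteq> B"
  unfolding relabel_def by (simp add: inj_image_subset_iff inj_image_fun)

lemma relabel_inj: "inj f \<Longrightarrow> inj (relabel f)"
  unfolding relabel_def by (simp add: inj_image_fun inj_image_eq_iff inj_def)

lemma relabel_Ln:
  assumes "\<sigma> permutes {0..<n}" "H \<in> Ln n"
  shows "relabel \<sigma> H \<in> Ln n"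
proof -
  have "relabel \<sigma> H \<subseteq> edges_on (\<sigma> ` {0..<n})"
    using assms relabel_edges[of H "{0..<n}" \<sigma>] permutes_inj_on[OF assms(1)] by (auto simp: Ln_def)
  then show ?thesis using permutes_image[OF assms(1)] by (simp add: Ln_def)
qed

lemma relabel_bij_Ln:
  assumes "\<sigma> permutes {0..<n}"
  shows "bij_betw (relabel \<sigma>) (Ln n) (Ln n)"
proof -
  have inv: "inv \<sigma> permutes {0..<n}" using assms by (rule permutes_inv)
  have "inj (relabel \<sigma>)" using assms permutes_inj relabel_inj by blast
  moreover have "relabel \<sigma> ` Ln n = Ln n"
  proof
    show "relabel \<sigma> ` Ln n \<subseteq> Ln n" using relabel_Ln assms by blast
    show "Ln n \<subseteq> relabel \<sigma> ` Ln n"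
    proof
      fix H assume H: "H \<in> Ln n"
      have "relabel \<sigma> (relabel (inv \<sigma>) H) = relabel (\<sigma> \<circ> inv \<sigma>) H" by (simp add: relabel_comp)
      also have "\<sigma> \<circ> inv \<sigma> = id" using assms permutes_inv_o(1) by blast
      finally show "H \<in> relabel \<sigma> ` Ln n" using relabel_Ln[OF inv H] by (metis image_eqI relabel_id)
    qed
  qed
  ultimately show ?thesis by (simp add: bij_betw_def inj_on_subset[of _ UNIV])
qed

lemma finite_Ln: "finite (Ln n)"
  unfolding Ln_def using finite_edges_on[of "{0..<n}"] by simp

locale rg =
  fixes P :: "nat set set measure"
  assumes prob: "prob_space P" and setsP: "sets P = sets Linf_M"
begin

sublocale prob_space P by (rule prob)

definition z :: "nat set set \<Rightarrow> real" where
  "z E = measure P {G \<in> space P. E \<subseteq> G}"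

definition p :: "nat \<Rightarrow> nat set set \<Rightarrow> real" where
  "p n H = measure P {G \<in> space P. induced G n = H}"

lemma gens_Pow: "{{G \<in> Linf. e \<in> G} | e. e \<in> edges_on UNIV} \<subseteq> Pow Linf" by auto

lemma space_P: "space P = Linf"
proof -
  have "space P = space Linf_M" using setsP sets_eq_imp_space_eq by blast
  also have "\<dots> = Linf" unfolding Linf_M_def using gens_Pow by (simp add: space_measure_of_conv)
  finally show ?thesis .
qed

lemma edge_event: "e \<in> edges_on UNIV \<Longrightarrow> {G \<in> space P. e \<in> G} \<in> sets P"
  unfolding setsP space_P Linf_M_def using gens_Pow by (auto simp: sets_measure_of_conv intro: sigma_sets.Basic)

lemma edge_event_neg: "e \<in> edges_on UNIV \<Longrightarrow> {G \<in> space P. e \<notin> G} \<in> sets P"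
proof -
  assume "e \<in> edges_on UNIV"
  then have "space P - {G \<in> space P. e \<in> G} \<in> sets P" using edge_event by blast
  moreover have "space P - {G \<in> space P. e \<in> G} = {G \<in> space P. e \<notin> G}" by auto
  ultimately show ?thesis by simp
qed

lemma pattern_event:
  assumes "finite S" "S \<subseteq> edges_on UNIV"
  shows "{G \<in> space P. G \<inter> S = K \<inter> S} \<in> sets P"
  using assms
proof (induction S rule: finite_induct)
  case empty then show ?case by simp
next
  case (insert e S)
  have eq: "{G \<in> space P. G \<inter> insert e S = K \<inter> insert e S} =
        {G \<in> space P. G \<inter> S = K \<inter> S} \<inter> (if e \<in> K then {G \<in> space P. e \<in> G} else {G \<in> space P. e \<notin> G})"
    by auto
  have A: "{G \<in> space P. G \<inter> S = K \<inter> S} \<in> sets P" using insert by simp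
  have B: "(if e \<in> K then {G \<in> space P. e \<in> G} else {G \<in> space P. e \<notin> G}) \<in> sets P"
    using insert.prems edge_event[of e] edge_event_neg[of e] by simp
  show ?case unfolding eq using A B by (rule sets.Int)
qed

lemma subset_event:
  assumes "finite E" "E \<subseteq> edges_on UNIV"
  shows "{G \<in> space P. E \<subseteq> G} \<in> sets P"
  using assms
proof (induction E rule: finite_induct)
  case empty then show ?case by simp
next
  case (insert e S)
  have "{G \<in> space P. insert e S \<subseteq> G} = {G \<in> space P. S \<subseteq> G} \<inter> {G \<in> space P. e \<in> G}" by auto
  moreover have "{G \<in> space P. S \<subseteq> G} \<in> sets P" using insert by simp
  moreover have "{G \<in> space P. e \<in> G} \<in> sets P" using insert.prems edge_event[of e] by simp
  ultimately show ?case by (metis (no_types, lifting) sets.Int)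
qed

lemma induced_eq: "G \<in> Linf \<Longrightarrow> induced G n = G \<inter> edges_on {0..<n}"
  unfolding induced_def Linf_def using edges_on_iff[of _ "{0..<n}"] by blast

lemma induced_Ln: "G \<in> Linf \<Longrightarrow> induced G n \<in> Ln n"
  by (auto simp: induced_eq Ln_def)

lemma induced_event: "H \<in> Ln n \<Longrightarrow> {G \<in> space P. induced G n = H} \<in> sets P"
proof -
  assume H: "H \<in> Ln n"
  have "{G \<in> space P. induced G n = H} = {G \<in> space P. G \<inter> edges_on {0..<n} = H \<inter> edges_on {0..<n}}"
    using H by (auto simp: space_P induced_eq Ln_def)
  then show ?thesis using pattern_event[of "edges_on {0..<n}" H] finite_edges_on edges_on_mono by auto
qed

lemma Zsum:
  assumes "E \<in> Ln n"
  shows "z E = (\<Sum>H\<in>{H \<in> Ln n. E \<subseteq> H}. p n H)"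
proof -
  have "{G \<in> space P. E \<subseteq> G} = (\<Union>H\<in>{H \<in> Ln n. E \<subseteq> H}. {G \<in> space P. induced G n = H})"
  proof safe
    fix G assume G: "G \<in> space P" "E \<subseteq> G"
    then have "E \<subseteq> induced G n" using assms by (auto simp: space_P induced_eq Ln_def)
    then show "G \<in> (\<Union>H\<in>{H \<in> Ln n. E \<subseteq> H}. {G \<in> space P. induced G n = H})"
      using G induced_Ln[of G n] by (auto simp: space_P)
  next
    fix G x assume "G \<in> space P" "E \<subseteq> induced G n" "x \<in> E"
    then show "x \<in> G" by (auto simp: induced_def)
  qed
  then have "z E = measure P (\<Union>H\<in>{H \<in> Ln n. E \<subseteq> H}. {G \<in> space P. induced G n = H})"
    by (simp add: z_def)
  also have "\<dots> = (\<Sum>H\<in>{H \<in> Ln n. E \<subseteq> H}. p n H)" unfolding p_def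
    by (rule measure_finite_Union) (auto simp: finite_Ln induced_event disjoint_family_on_def)
  finally show ?thesis .
qed

lemma sum_relabel:
  assumes "\<sigma> permutes {0..<n}" "E \<in> Ln n"
  shows "(\<Sum>H\<in>{H \<in> Ln n. relabel \<sigma> E \<subseteq> H}. f H) = (\<Sum>H\<in>{H \<in> Ln n. E \<subseteq> H}. f (relabel \<sigma> H))"
proof -
  have b: "bij_betw (relabel \<sigma>) (Ln n) (Ln n)" using assms relabel_bij_Ln by blast
  have inj: "inj \<sigma>" using assms permutes_inj by blast
  have "bij_betw (relabel \<sigma>) {H \<in> Ln n. E \<subseteq> H} {H \<in> Ln n. relabel \<sigma> E \<subseteq> H}"
    unfolding bij_betw_def
  proof
    show "inj_on (relabel \<sigma>) {H \<in> Ln n. E \<subseteq> H}" using b by (auto simp: bij_betw_def inj_on_def)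
    show "relabel \<sigma> ` {H \<in> Ln n. E \<subseteq> H} = {H \<in> Ln n. relabel \<sigma> E \<subseteq> H}"
    proof safe
      fix H assume "H \<in> Ln n" "relabel \<sigma> E \<subseteq> H"
      then have "H \<in> relabel \<sigma> ` Ln n" using b by (simp add: bij_betw_def)
      then obtain H' where "H' \<in> Ln n" "H = relabel \<sigma> H'" by blast
      then show "H \<in> relabel \<sigma> ` {H \<in> Ln n. E \<subseteq> H}"
        using \<open>relabel \<sigma> E \<subseteq> H\<close> relabel_subset_iff[OF inj] by auto
    qed (use b relabel_subset_iff[OF inj] in \<open>auto simp: bij_betw_def\<close>)
  qed
  then show ?thesis by (simp add: sum.reindex_bij_betw[symmetric])
qed

lemma exch_imp_z_perm:
  assumes "exchangeable P" "\<sigma> permutes {0..<n}" "E \<in> Ln n"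
  shows "z (relabel \<sigma> E) = z E"
proof -
  have "z (relabel \<sigma> E) = (\<Sum>H\<in>{H \<in> Ln n. relabel \<sigma> E \<subseteq> H}. p n H)"
    using Zsum relabel_Ln assms by blast
  also have "\<dots> = (\<Sum>H\<in>{H \<in> Ln n. E \<subseteq> H}. p n (relabel \<sigma> H))"
    using sum_relabel assms by blast
  also have "\<dots> = (\<Sum>H\<in>{H \<in> Ln n. E \<subseteq> H}. p n H)"
    using assms(1,2) unfolding exchangeable_def p_def by (intro sum.cong) auto
  also have "\<dots> = z E" using Zsum assms by simp
  finally show ?thesis .
qed

lemma z_perm_imp_exch:
  assumes zp: "\<And>n \<sigma> E. \<sigma> permutes {0..<n} \<Longrightarrow> E \<in> Ln n \<Longrightarrow> z (relabel \<sigma> E) = z E"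
  shows "exchangeable P"
proof -
  have main: "p n (relabel \<sigma> H) = p n H" if \<sigma>: "\<sigma> permutes {0..<n}" and H: "H \<in> Ln n" for n \<sigma> H
  proof -
    define m where "m = card (edges_on {0..<n} - H)"
    have "\<forall>H. H \<in> Ln n \<longrightarrow> card (edges_on {0..<n} - H) = m \<longrightarrow> p n (relabel \<sigma> H) = p n H"
    proof (induction m rule: less_induct)
      case (less m)
      show ?case
      proof (intro allI impI)
        fix H assume H: "H \<in> Ln n" and cH: "card (edges_on {0..<n} - H) = m"
        have split: "{H' \<in> Ln n. K \<subseteq> H'} = insert K {H' \<in> Ln n. K \<subset> H'}" if "K \<in> Ln n" for K
          using that by auto
        have pK: "p n K = z K - (\<Sum>H'\<in>{H' \<in> Ln n. K \<subset> H'}. p n H')" if "K \<in> Ln n" for K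
          using Zsum[OF that] split[OF that] finite_Ln by (simp add: sum.insert)
        have IH: "p n (relabel \<sigma> H') = p n H'" if "H' \<in> Ln n" "H \<subset> H'" for H'
        proof -
          have "card (edges_on {0..<n} - H') < card (edges_on {0..<n} - H)"
            using that H finite_edges_on[of "{0..<n}"] by (intro psubset_card_mono) (auto simp: Ln_def)
          then show ?thesis using less.IH that cH by blast
        qed
        have HL: "relabel \<sigma> H \<in> Ln n" using relabel_Ln \<sigma> H by blast
        have inj: "inj \<sigma>" using \<sigma> permutes_inj by blast
        have "(\<Sum>H'\<in>{H' \<in> Ln n. relabel \<sigma> H \<subset> H'}. p n H') =
              (\<Sum>H'\<in>{H' \<in> Ln n. relabel \<sigma> H \<subseteq> H'}. p n H') - p n (relabel \<sigma> H)"
          using split[OF HL] finite_Ln by (simp add: sum.insert)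
        also have "\<dots> = (\<Sum>H'\<in>{H' \<in> Ln n. H \<subseteq> H'}. p n (relabel \<sigma> H')) - p n (relabel \<sigma> H)"
          using sum_relabel[OF \<sigma> H] by simp
        also have "\<dots> = (\<Sum>H'\<in>{H' \<in> Ln n. H \<subset> H'}. p n (relabel \<sigma> H'))"
          using split[OF H] finite_Ln by (simp add: sum.insert)
        also have "\<dots> = (\<Sum>H'\<in>{H' \<in> Ln n. H \<subset> H'}. p n H')"
          using IH by (intro sum.cong) auto
        finally show "p n (relabel \<sigma> H) = p n H"
          using pK[OF HL] pK[OF H] zp[OF \<sigma> H] by simp
      qed
    qed
    then show ?thesis using H m_def by blast
  qed
  show ?thesis unfolding exchangeable_def using main by (simp add: p_def)
qed

lemma exch_iff_z_perm:
  "exchangeable P \<longleftrightarrow> (\<forall>n \<sigma> E. \<sigma> permutes {0..<n} \<longrightarrow> E \<in> Ln n \<longrightarrow> z (relabel \<sigma> E) = z E)"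
  using exch_imp_z_perm z_perm_imp_exch by blast

lemma mobius_z: "mobius_param P F = z (snd F)"
  by (simp add: mobius_param_def z_def)

lemma exch_iso_z:
  assumes "exchangeable P" "(F, F') \<in> iso_rel"
  shows "z (snd F) = z (snd F')"
proof -
  obtain V E V' E' where FF: "F = (V, E)" "F' = (V', E')" by (cases F, cases F')
  from iso_relD[OF assms(2)[unfolded FF]] obtain f where
    f: "(V, E) \<in> fgraphs" "(V', E') \<in> fgraphs" "bij_betw f V V'" "E' = relabel f E" by blast
  have "finite (V \<union> V')" using f fgraphsD by blast
  then obtain n where n: "V \<union> V' \<subseteq> {..<n}" using finite_nat_bounded by blast
  then have n': "V \<subseteq> {0..<n}" "V' \<subseteq> {0..<n}" by auto
  obtain \<sigma> where \<sigma>: "\<sigma> permutes {0..<n}" "\<forall>x\<in>V. \<sigma> x = f x" using perm_extend[OF n' f(3)] by blast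
  have "relabel \<sigma> E = relabel f E"
    using \<sigma>(2) Union_edges[of E V] fgraphsD[OF f(1)] by (intro relabel_cong) auto
  moreover have "E \<in> Ln n" using fgraphsD[OF f(1)] edges_on_mono[OF n'(1)] by (auto simp: Ln_def)
  ultimately show ?thesis using exch_imp_z_perm[OF assms(1) \<sigma>(1)] FF f(4) by (metis snd_conv)
qed

end


definition Inj :: "nat set \<Rightarrow> nat \<Rightarrow> (nat \<Rightarrow> nat) set" where
  "Inj V n = {\<phi> \<in> V \<rightarrow>\<^sub>E {0..<n}. inj_on \<phi> V}"

definition ind :: "nat set set \<Rightarrow> nat set set \<Rightarrow> real" where
  "ind E G = (if E \<subseteq> G then 1 else 0)"

definition Tn :: "nat \<Rightarrow> nat set \<times> nat set set \<Rightarrow> nat set set \<Rightarrow> real" where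
  "Tn n F G = (\<Sum>\<phi>\<in>Inj (fst F) n. ind (relabel \<phi> (snd F)) G) / real (card (Inj (fst F) n))"

lemma finite_Inj: "finite V \<Longrightarrow> finite (Inj V n)"
  unfolding Inj_def by (rule finite_subset[of _ "V \<rightarrow>\<^sub>E {0..<n}"]) (auto intro: finite_PiE)

lemma Inj_nonempty:
  assumes "finite V" "card V \<le> n"
  shows "Inj V n \<noteq> {}"
proof -
  obtain f where f: "f ` V \<subseteq> {0..<n}" "inj_on f V"
    using card_le_inj[of V "{0..<n}"] assms by auto
  then have "restrict f V \<in> Inj V n" by (auto simp: Inj_def inj_on_def)
  then show ?thesis by blast
qed

lemma ind_bounds: "0 \<le> ind E G" "ind E G \<le> 1"
  by (auto simp: ind_def)

lemma Tn_bounds: "0 \<le> Tn n F G" "Tn n F G \<le> 1"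
proof -
  show "0 \<le> Tn n F G" unfolding Tn_def by (intro divide_nonneg_nonneg sum_nonneg) (auto simp: ind_def)
  have "(\<Sum>\<phi>\<in>Inj (fst F) n. ind (relabel \<phi> (snd F)) G) \<le> (\<Sum>\<phi>\<in>Inj (fst F) n. 1)"
    by (intro sum_mono) (simp add: ind_def)
  then show "Tn n F G \<le> 1" unfolding Tn_def
    by (cases "card (Inj (fst F) n) = 0") (auto simp: divide_le_eq_1)
qed

lemma Tn_empty: "Tn n ({}, {}) G = 1"
proof -
  have "Inj {} n = {\<lambda>_. undefined}" by (auto simp: Inj_def)
  then show ?thesis by (simp add: Tn_def ind_def relabel_def)
qed

lemma Tn_iso:
  assumes "(F, F') \<in> iso_rel"
  shows "Tn n F G = Tn n F' G"
proof -
  obtain V E V' E' where FF: "F = (V, E)" "F' = (V', E')" by (cases F, cases F')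
  from iso_relD[OF assms[unfolded FF]] obtain f where
    f: "(V, E) \<in> fgraphs" "(V', E') \<in> fgraphs" "bij_betw f V V'" "E' = relabel f E" by blast
  define g where "g = the_inv_into V f"
  have g: "bij_betw g V' V" using f(3) by (simp add: g_def bij_betw_the_inv_into)
  have gf: "g (f x) = x" if "x \<in> V" for x
    using f(3) that by (simp add: g_def the_inv_into_f_f bij_betw_def)
  have fg: "f (g y) = y" if "y \<in> V'" for y
    using f(3) that by (simp add: g_def f_the_inv_into_f_bij_betw)
  define \<Phi> where "\<Phi> \<psi> = restrict (\<psi> \<circ> f) V" for \<psi> :: "nat \<Rightarrow> nat"
  define \<Psi> where "\<Psi> \<phi> = restrict (\<phi> \<circ> g) V'" for \<phi> :: "nat \<Rightarrow> nat"
  have fV: "f ` V = V'" "g ` V' = V" using f(3) g by (auto simp: bij_betw_def)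
  have bij: "bij_betw \<Phi> (Inj V' n) (Inj V n)"
  proof (rule bij_betw_byWitness[where f'=\<Psi>])
    have gV: "g y \<in> V" if "y \<in> V'" for y using g that by (auto simp: bij_betw_def)
    have fV': "f x \<in> V'" if "x \<in> V" for x using f(3) that by (auto simp: bij_betw_def)
    show "\<forall>a\<in>Inj V' n. \<Psi> (\<Phi> a) = a"
    proof
      fix \<psi> assume "\<psi> \<in> Inj V' n"
      then have ext: "\<psi> \<in> extensional V'" by (auto simp: Inj_def PiE_def)
      show "\<Psi> (\<Phi> \<psi>) = \<psi>"
      proof
        fix y show "\<Psi> (\<Phi> \<psi>) y = \<psi> y"
          using ext gV fg by (cases "y \<in> V'") (auto simp: \<Psi>_def \<Phi>_def extensional_def)
      qed
    qed
    show "\<forall>a\<in>Inj V n. \<Phi> (\<Psi> a) = a"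
    proof
      fix \<psi> assume "\<psi> \<in> Inj V n"
      then have ext: "\<psi> \<in> extensional V" by (auto simp: Inj_def PiE_def)
      show "\<Phi> (\<Psi> \<psi>) = \<psi>"
      proof
        fix y show "\<Phi> (\<Psi> \<psi>) y = \<psi> y"
          using ext fV' gf by (cases "y \<in> V") (auto simp: \<Psi>_def \<Phi>_def extensional_def)
      qed
    qed
    have injf: "inj_on f V" and injg: "inj_on g V'" using f(3) g by (auto simp: bij_betw_def)
    show "\<Phi> ` Inj V' n \<subseteq> Inj V n"
    proof safe
      fix \<psi> assume "\<psi> \<in> Inj V' n"
      then have \<psi>: "\<And>y. y \<in> V' \<Longrightarrow> \<psi> y \<in> {0..<n}" "inj_on \<psi> V'" by (auto simp: Inj_def PiE_def Pi_def)
      have "\<Phi> \<psi> \<in> V \<rightarrow>\<^sub>E {0..<n}" using \<psi>(1) fV' by (auto simp: \<Phi>_def)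
      moreover have "inj_on (\<Phi> \<psi>) V"
        unfolding inj_on_def \<Phi>_def using \<psi>(2) fV' injf by (auto dest: inj_onD)
      ultimately show "\<Phi> \<psi> \<in> Inj V n" by (simp add: Inj_def)
    qed
    show "\<Psi> ` Inj V n \<subseteq> Inj V' n"
    proof safe
      fix \<psi> assume "\<psi> \<in> Inj V n"
      then have \<psi>: "\<And>y. y \<in> V \<Longrightarrow> \<psi> y \<in> {0..<n}" "inj_on \<psi> V" by (auto simp: Inj_def PiE_def Pi_def)
      have "\<Psi> \<psi> \<in> V' \<rightarrow>\<^sub>E {0..<n}" using \<psi>(1) gV by (auto simp: \<Psi>_def)
      moreover have "inj_on (\<Psi> \<psi>) V'"
        unfolding inj_on_def \<Psi>_def using \<psi>(2) gV injg by (auto dest: inj_onD)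
      ultimately show "\<Psi> \<psi> \<in> Inj V' n" by (simp add: Inj_def)
    qed
  qed
  have rel: "relabel (\<Phi> \<psi>) E = relabel \<psi> E'" for \<psi>
  proof -
    have "relabel (\<Phi> \<psi>) E = relabel (\<psi> \<circ> f) E"
      using Union_edges[of E V] fgraphsD[OF f(1)] by (intro relabel_cong) (auto simp: \<Phi>_def)
    then show ?thesis by (simp add: f(4) relabel_comp)
  qed
  have "(\<Sum>\<phi>\<in>Inj V n. ind (relabel \<phi> E) G) = (\<Sum>\<psi>\<in>Inj V' n. ind (relabel (\<Phi> \<psi>) E) G)"
    using bij by (simp add: sum.reindex_bij_betw[symmetric])
  moreover have "card (Inj V n) = card (Inj V' n)" using bij bij_betw_same_card by metis
  ultimately show ?thesis unfolding FF Tn_def by (simp add: rel)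
qed


lemma Inj_mem: "\<psi> \<in> Inj W n \<Longrightarrow> w \<in> W \<Longrightarrow> \<psi> w < n"
  by (auto simp: Inj_def PiE_def Pi_def)

lemma fiber_card_eq:
  assumes "w \<in> W" "a < n" "b < n"
  shows "card {\<psi> \<in> Inj W n. \<psi> w = a} = card {\<psi> \<in> Inj W n. \<psi> w = b}"
proof -
  define \<tau> where "\<tau> x = (if x = a then b else if x = b then a else x)" for x :: nat
  have \<tau>\<tau>: "\<tau> (\<tau> x) = x" for x by (simp add: \<tau>_def)
  have \<tau>n: "x < n \<Longrightarrow> \<tau> x < n" for x using assms by (simp add: \<tau>_def)
  have inj\<tau>: "inj \<tau>" by (metis \<tau>\<tau> injI)
  define R where "R \<psi> = restrict (\<tau> \<circ> \<psi>) W" for \<psi> :: "nat \<Rightarrow> nat"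
  have RI: "R \<psi> \<in> Inj W n" if "\<psi> \<in> Inj W n" for \<psi>
  proof -
    have "R \<psi> \<in> W \<rightarrow>\<^sub>E {0..<n}" using that \<tau>n by (auto simp: R_def Inj_mem)
    moreover have "inj_on (R \<psi>) W" using that inj\<tau> unfolding R_def inj_on_def Inj_def
      by (auto dest: injD)
    ultimately show ?thesis by (simp add: Inj_def)
  qed
  have RR: "R (R \<psi>) = \<psi>" if "\<psi> \<in> Inj W n" for \<psi>
  proof
    fix x
    have "\<psi> \<in> extensional W" using that by (auto simp: Inj_def PiE_def)
    then show "R (R \<psi>) x = \<psi> x" by (cases "x \<in> W") (auto simp: R_def \<tau>\<tau> extensional_def)
  qed
  have "bij_betw R {\<psi> \<in> Inj W n. \<psi> w = a} {\<psi> \<in> Inj W n. \<psi> w = b}"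
  proof (rule bij_betw_byWitness[where f'=R])
    show "\<forall>x\<in>{\<psi> \<in> Inj W n. \<psi> w = a}. R (R x) = x" using RR by blast
    show "\<forall>x\<in>{\<psi> \<in> Inj W n. \<psi> w = b}. R (R x) = x" using RR by blast
    show "R ` {\<psi> \<in> Inj W n. \<psi> w = a} \<subseteq> {\<psi> \<in> Inj W n. \<psi> w = b}"
      using RI assms(1) by (auto simp: R_def \<tau>_def)
    show "R ` {\<psi> \<in> Inj W n. \<psi> w = b} \<subseteq> {\<psi> \<in> Inj W n. \<psi> w = a}"
      using RI assms(1) by (auto simp: R_def \<tau>_def)
  qed
  then show ?thesis by (rule bij_betw_same_card)
qed

lemma fiber_card:
  assumes "finite W" "w \<in> W"
  shows "real (card {\<psi> \<in> Inj W n. \<psi> w = a}) * real n \<le> real (card (Inj W n))"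
proof (cases "a < n")
  case True
  have "Inj W n = (\<Union>b\<in>{0..<n}. {\<psi> \<in> Inj W n. \<psi> w = b})"
    using Inj_mem assms(2) by auto
  moreover have "card (\<Union>b\<in>{0..<n}. {\<psi> \<in> Inj W n. \<psi> w = b}) = (\<Sum>b\<in>{0..<n}. card {\<psi> \<in> Inj W n. \<psi> w = b})"
    by (rule card_UN_disjoint) (auto simp: finite_Inj[OF assms(1)])
  ultimately have "card (Inj W n) = (\<Sum>b\<in>{0..<n}. card {\<psi> \<in> Inj W n. \<psi> w = b})" by simp
  also have "\<dots> = (\<Sum>b\<in>{0..<n}. card {\<psi> \<in> Inj W n. \<psi> w = a})"
    using fiber_card_eq[OF assms(2) True] by (intro sum.cong) auto
  finally show ?thesis by simp
next
  case False
  then have "{\<psi> \<in> Inj W n. \<psi> w = a} = {}" using Inj_mem assms(2) by force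
  then show ?thesis by (metis card.empty of_nat_0 mult_zero_left of_nat_0_le_iff)
qed

lemma overlap_card:
  assumes "finite W" "finite A"
  shows "real (card {\<psi> \<in> Inj W n. \<psi> ` W \<inter> A \<noteq> {}}) * real n \<le> real (card A) * real (card W) * real (card (Inj W n))"
proof -
  have sub: "{\<psi> \<in> Inj W n. \<psi> ` W \<inter> A \<noteq> {}} \<subseteq> (\<Union>wa\<in>W \<times> A. {\<psi> \<in> Inj W n. \<psi> (fst wa) = snd wa})"
    by auto
  have "card {\<psi> \<in> Inj W n. \<psi> ` W \<inter> A \<noteq> {}} \<le> card (\<Union>wa\<in>W \<times> A. {\<psi> \<in> Inj W n. \<psi> (fst wa) = snd wa})"
    using sub by (intro card_mono) (rule finite_subset[of _ "Inj W n"], auto simp: finite_Inj[OF assms(1)])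
  also have "\<dots> \<le> (\<Sum>wa\<in>W \<times> A. card {\<psi> \<in> Inj W n. \<psi> (fst wa) = snd wa})"
    by (rule card_UN_le) (use assms in auto)
  finally have c: "real (card {\<psi> \<in> Inj W n. \<psi> ` W \<inter> A \<noteq> {}})
     \<le> real (\<Sum>wa\<in>W \<times> A. card {\<psi> \<in> Inj W n. \<psi> (fst wa) = snd wa})"
    by (simp only: of_nat_le_iff)
  have "real (card {\<psi> \<in> Inj W n. \<psi> ` W \<inter> A \<noteq> {}}) * real n
     \<le> real (\<Sum>wa\<in>W \<times> A. card {\<psi> \<in> Inj W n. \<psi> (fst wa) = snd wa}) * real n"
    using c by (rule mult_right_mono) simp
  also have "\<dots> = (\<Sum>wa\<in>W \<times> A. real (card {\<psi> \<in> Inj W n. \<psi> (fst wa) = snd wa}) * real n)"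
    by (simp add: sum_distrib_right)
  also have "\<dots> \<le> (\<Sum>wa\<in>W \<times> A. real (card (Inj W n)))"
    using fiber_card[OF assms(1)] by (intro sum_mono) auto
  also have "\<dots> = real (card A) * real (card W) * real (card (Inj W n))"
    using assms by (simp add: card_cartesian_product)
  finally show ?thesis .
qed

lemma avg_diff:
  fixes f :: "'a \<Rightarrow> real"
  assumes "finite S" "D \<subseteq> S" "D \<noteq> {}" "\<And>x. x \<in> S \<Longrightarrow> 0 \<le> f x \<and> f x \<le> 1"
  shows "\<bar>(\<Sum>x\<in>S. f x) / card S - (\<Sum>x\<in>D. f x) / card D\<bar> \<le> 2 * card (S - D) / card S"
proof -
  have fD: "finite D" using assms finite_subset by blast
  define s where "s = real (card S)"
  define d where "d = real (card D)"
  define A where "A = (\<Sum>x\<in>D. f x)"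
  define B where "B = (\<Sum>x\<in>S - D. f x)"
  have d0: "d > 0" using assms fD by (simp add: d_def card_gt_0_iff)
  have ds: "d \<le> s" using assms by (simp add: d_def s_def card_mono)
  have cSD: "real (card (S - D)) = s - d"
    using assms fD by (simp add: card_Diff_subset s_def d_def of_nat_diff card_mono)
  have sum: "(\<Sum>x\<in>S. f x) = A + B"
    using assms by (simp add: A_def B_def sum.subset_diff[of D S])
  have "A \<le> (\<Sum>x\<in>D. 1)" unfolding A_def using assms by (intro sum_mono) auto
  then have A0: "0 \<le> A" "A \<le> d"
    using assms by (auto simp: A_def d_def intro!: sum_nonneg)
  have "B \<le> (\<Sum>x\<in>S - D. 1)" unfolding B_def using assms by (intro sum_mono) auto
  then have B0: "0 \<le> B" "B \<le> s - d"
    using assms cSD by (auto simp: B_def intro!: sum_nonneg)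
  have "(A + B) / s - A / d = B / s - A * (s - d) / (s * d)"
    using d0 ds by (simp add: field_simps)
  moreover have "A * (s - d) / (s * d) \<le> (s - d) / s"
  proof -
    have "A * (s - d) \<le> d * (s - d)" using A0 ds by (intro mult_right_mono) auto
    then have "A * (s - d) / d \<le> s - d" using d0 by (simp add: pos_divide_le_eq mult.commute)
    then have "A * (s - d) / d / s \<le> (s - d) / s" using d0 ds by (intro divide_right_mono) auto
    then show ?thesis by (simp add: divide_divide_eq_left mult.commute)
  qed
  moreover have "0 \<le> A * (s - d) / (s * d)" using A0 ds d0 by simp
  moreover have "B / s \<le> (s - d) / s" using B0 ds d0 by (simp add: divide_right_mono)
  moreover have "0 \<le> B / s" using B0 ds d0 by simp
  ultimately have "\<bar>(A + B) / s - A / d\<bar> \<le> 2 * ((s - d) / s)" unfolding abs_le_iff by linarith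
  then show ?thesis using sum cSD by (simp add: s_def d_def A_def)
qed

lemma ind_Un: "ind (A \<union> B) G = ind A G * ind B G"
  by (simp add: ind_def)


lemma Tn_mult:
  assumes F: "(V, E) \<in> fgraphs" and H: "(W, D) \<in> fgraphs" and disj: "V \<inter> W = {}"
    and n: "card V + card W \<le> n" "0 < n"
  shows "\<bar>Tn n (V, E) G * Tn n (W, D) G - Tn n (V \<union> W, E \<union> D) G\<bar> \<le> 2 * card V * card W / n"
proof -
  have fV: "finite V" "E \<subseteq> edges_on V" using fgraphsD[OF F] by auto
  have fW: "finite W" "D \<subseteq> edges_on W" using fgraphsD[OF H] by auto
  define IV where "IV = Inj V n"
  define IW where "IW = Inj W n"
  define IU where "IU = Inj (V \<union> W) n"
  define S where "S = IV \<times> IW"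
  define Dis where "Dis = {(\<phi>, \<psi>) \<in> S. \<phi> ` V \<inter> \<psi> ` W = {}}"
  define h where "h = (\<lambda>(\<phi>, \<psi>). ind (relabel \<phi> E) G * ind (relabel \<psi> D) G)"
  have finS: "finite S" using fV fW by (simp add: S_def IV_def IW_def finite_Inj)
  have h01: "0 \<le> h x \<and> h x \<le> 1" for x by (auto simp: h_def ind_def split: prod.splits)
  have prod: "Tn n (V, E) G * Tn n (W, D) G = (\<Sum>x\<in>S. h x) / card S"
  proof -
    have "(\<Sum>\<phi>\<in>IV. ind (relabel \<phi> E) G) * (\<Sum>\<psi>\<in>IW. ind (relabel \<psi> D) G) = (\<Sum>x\<in>S. h x)"
      by (simp add: sum_product S_def h_def sum.cartesian_product)
    moreover have "card S = card IV * card IW" by (simp add: S_def card_cartesian_product)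
    ultimately show ?thesis by (simp add: Tn_def IV_def IW_def)
  qed
  define R where "R \<kappa> = (restrict \<kappa> V, restrict \<kappa> W)" for \<kappa> :: "nat \<Rightarrow> nat"
  define M where "M = (\<lambda>(\<phi>, \<psi>) x. if x \<in> V then \<phi> x else if x \<in> W then \<psi> x else (undefined::nat))"
  have bij: "bij_betw R IU Dis"
  proof (rule bij_betw_byWitness[where f'=M])
    show "\<forall>a\<in>IU. M (R a) = a"
    proof
      fix \<kappa> assume "\<kappa> \<in> IU"
      then have "\<kappa> \<in> extensional (V \<union> W)" by (auto simp: IU_def Inj_def PiE_def)
      then show "M (R \<kappa>) = \<kappa>" by (auto simp: M_def R_def fun_eq_iff extensional_def)
    qed
    show "\<forall>a'\<in>Dis. R (M a') = a'"
    proof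
      fix x assume "x \<in> Dis"
      then obtain \<phi> \<psi> where x: "x = (\<phi>, \<psi>)" "\<phi> \<in> IV" "\<psi> \<in> IW" by (auto simp: Dis_def S_def)
      then have "\<phi> \<in> extensional V" "\<psi> \<in> extensional W" by (auto simp: IV_def IW_def Inj_def PiE_def)
      then show "R (M x) = x" using x(1) disj by (auto simp: M_def R_def fun_eq_iff extensional_def)
    qed
    show "R ` IU \<subseteq> Dis"
    proof (rule image_subsetI)
      fix \<kappa> assume "\<kappa> \<in> IU"
      then have \<kappa>: "\<And>y. y \<in> V \<union> W \<Longrightarrow> \<kappa> y < n" "inj_on \<kappa> (V \<union> W)"
        by (auto simp: IU_def Inj_def PiE_def Pi_def)
      have "restrict \<kappa> V \<in> IV" using \<kappa> by (auto simp: IV_def Inj_def inj_on_def)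
      moreover have "restrict \<kappa> W \<in> IW" using \<kappa> by (auto simp: IW_def Inj_def inj_on_def)
      moreover have "restrict \<kappa> V ` V \<inter> restrict \<kappa> W ` W = {}"
        using \<kappa>(2) disj by (auto simp: inj_on_def)
      ultimately show "R \<kappa> \<in> Dis" by (simp add: R_def Dis_def S_def)
    qed
    show "M ` Dis \<subseteq> IU"
    proof (rule image_subsetI)
      fix x assume "x \<in> Dis"
      then obtain \<phi> \<psi> where x: "x = (\<phi>, \<psi>)" "(\<phi>, \<psi>) \<in> Dis" by (metis surj_pair)
      then have a: "\<phi> \<in> Inj V n" "\<psi> \<in> Inj W n" "\<phi> ` V \<inter> \<psi> ` W = {}"
        by (auto simp: Dis_def S_def IV_def IW_def)
      have "M (\<phi>, \<psi>) \<in> (V \<union> W) \<rightarrow>\<^sub>E {0..<n}" using a(1,2) by (auto simp: M_def Inj_mem split: if_splits)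
      moreover have "inj_on (M (\<phi>, \<psi>)) (V \<union> W)"
        using a disj unfolding inj_on_def M_def Inj_def by (auto dest: inj_onD)
      ultimately show "M x \<in> IU" by (simp add: IU_def Inj_def x(1))
    qed
  qed
  have hR: "ind (relabel \<kappa> (E \<union> D)) G = h (R \<kappa>)" for \<kappa>
  proof -
    have "relabel \<kappa> E = relabel (restrict \<kappa> V) E"
      using Union_edges[OF fV(2)] by (intro relabel_cong) auto
    moreover have "relabel \<kappa> D = relabel (restrict \<kappa> W) D"
      using Union_edges[OF fW(2)] by (intro relabel_cong) auto
    ultimately show ?thesis by (simp add: relabel_Un ind_Un h_def R_def)
  qed
  have union: "Tn n (V \<union> W, E \<union> D) G = (\<Sum>x\<in>Dis. h x) / card Dis"
  proof -
    have "(\<Sum>\<kappa>\<in>IU. ind (relabel \<kappa> (E \<union> D)) G) = (\<Sum>\<kappa>\<in>IU. h (R \<kappa>))" by (simp add: hR)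
    also have "\<dots> = (\<Sum>x\<in>Dis. h x)" using bij by (rule sum.reindex_bij_betw)
    finally show ?thesis using bij_betw_same_card[OF bij] by (simp add: Tn_def IU_def)
  qed
  have IUne: "IU \<noteq> {}" unfolding IU_def
    using fV fW disj n by (intro Inj_nonempty) (auto simp: card_Un_disjoint)
  have Disne: "Dis \<noteq> {}" using bij IUne by (auto simp: bij_betw_def)
  have DisS: "Dis \<subseteq> S" by (auto simp: Dis_def)
  have main: "\<bar>Tn n (V, E) G * Tn n (W, D) G - Tn n (V \<union> W, E \<union> D) G\<bar> \<le> 2 * card (S - Dis) / card S"
    unfolding prod union using avg_diff[OF finS DisS Disne] h01 by blast
  have SD: "S - Dis = Sigma IV (\<lambda>\<phi>. {\<psi> \<in> Inj W n. \<psi> ` W \<inter> \<phi> ` V \<noteq> {}})"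
    by (auto simp: S_def Dis_def IW_def)
  have "real (card (S - Dis)) = (\<Sum>\<phi>\<in>IV. real (card {\<psi> \<in> Inj W n. \<psi> ` W \<inter> \<phi> ` V \<noteq> {}}))"
    unfolding SD using fV fW
    by (subst card_SigmaI) (auto simp: IV_def finite_Inj intro: finite_subset[OF _ finite_Inj[OF fW(1)]])
  then have "real (card (S - Dis)) * n = (\<Sum>\<phi>\<in>IV. real (card {\<psi> \<in> Inj W n. \<psi> ` W \<inter> \<phi> ` V \<noteq> {}}) * n)"
    by (simp add: sum_distrib_right)
  also have "\<dots> \<le> (\<Sum>\<phi>\<in>IV. real (card V) * real (card W) * real (card IW))"
  proof (rule sum_mono)
    fix \<phi> assume "\<phi> \<in> IV"
    then have "card (\<phi> ` V) = card V" by (simp add: IV_def Inj_def card_image)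
    then show "real (card {\<psi> \<in> Inj W n. \<psi> ` W \<inter> \<phi> ` V \<noteq> {}}) * n \<le> real (card V) * real (card W) * real (card IW)"
      using overlap_card[OF fW(1), of "\<phi> ` V" n] fV by (simp add: IW_def)
  qed
  also have "\<dots> = real (card V) * real (card W) * real (card S)"
    by (simp add: S_def card_cartesian_product)
  finally have c: "real (card (S - Dis)) * n \<le> real (card V) * real (card W) * real (card S)" .
  have cS: "card S > 0" using finS DisS Disne by (auto simp: card_gt_0_iff)
  have "2 * real (card (S - Dis)) / card S \<le> 2 * card V * card W / n"
    using c cS n(2) by (simp add: field_simps)
  then show ?thesis using main by linarith
qed


lemma relabel_Inj_edges:
  assumes "\<phi> \<in> Inj V n" "E \<subseteq> edges_on V" "finite E"
  shows "finite (relabel \<phi> E)" "relabel \<phi> E \<subseteq> edges_on UNIV"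
proof -
  show "finite (relabel \<phi> E)" using assms(3) by (simp add: relabel_def)
  have "inj_on \<phi> V" using assms(1) by (simp add: Inj_def)
  then have "relabel \<phi> E \<subseteq> edges_on (\<phi> ` V)" by (rule relabel_edges[OF assms(2)])
  then show "relabel \<phi> E \<subseteq> edges_on UNIV" using edges_on_mono[of "\<phi> ` V" UNIV] by blast
qed

lemma fgraphs_finite_E: "(V, E) \<in> fgraphs \<Longrightarrow> finite E"
proof -
  assume "(V, E) \<in> fgraphs"
  then have "finite V" "E \<subseteq> edges_on V" using fgraphsD by auto
  then show "finite E" using finite_edges_on finite_subset by metis
qed

lemma K_bound: "finite V \<Longrightarrow> V \<subseteq> {..<Suc (\<Sum>V)}"
proof
  fix x assume "finite V" "x \<in> V"
  then have "x \<le> \<Sum>V" by (intro member_le_sum) auto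
  then show "x \<in> {..<Suc (\<Sum>V)}" by simp
qed

definition c2 :: "nat set \<Rightarrow> nat set set \<Rightarrow> nat set set" where
  "c2 V E = E \<union> relabel ((+) (Suc (\<Sum>V))) E"

context rg
begin

lemma ind_meas: "finite E \<Longrightarrow> E \<subseteq> edges_on UNIV \<Longrightarrow> (\<lambda>G. ind E G) \<in> borel_measurable P"
proof -
  assume a: "finite E" "E \<subseteq> edges_on UNIV"
  have eq: "(\<lambda>G. ind E G) = indicator {G. E \<subseteq> G}" by (auto simp: ind_def indicator_def fun_eq_iff)
  have "{G. E \<subseteq> G} \<inter> space P = {G \<in> space P. E \<subseteq> G}" by auto
  then show ?thesis unfolding eq borel_measurable_indicator_iff using subset_event[OF a] by simp
qed

lemma ind_int: "finite E \<Longrightarrow> E \<subseteq> edges_on UNIV \<Longrightarrow> integral\<^sup>L P (\<lambda>G. ind E G) = z E"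
proof -
  assume a: "finite E" "E \<subseteq> edges_on UNIV"
  have eq: "(\<lambda>G. ind E G) = indicator {G. E \<subseteq> G}" by (auto simp: ind_def indicator_def fun_eq_iff)
  have "{G. E \<subseteq> G} \<inter> space P = {G \<in> space P. E \<subseteq> G}" by auto
  then show ?thesis unfolding eq Bochner_Integration.integral_indicator z_def by simp
qed

lemma bounded_integrable:
  "f \<in> borel_measurable P \<Longrightarrow> (\<And>G. \<bar>f G\<bar> \<le> B) \<Longrightarrow> integrable P (f :: _ \<Rightarrow> real)"
  by (rule integrable_const_bound[where B=B]) auto

lemma Tn_meas: "F \<in> fgraphs \<Longrightarrow> (\<lambda>G. Tn n F G) \<in> borel_measurable P"
proof -
  assume F: "F \<in> fgraphs"
  obtain V E where FF: "F = (V, E)" by (cases F)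
  have fE: "finite E" "E \<subseteq> edges_on V" "finite V" using F FF fgraphsD fgraphs_finite_E by auto
  have "(\<lambda>G. \<Sum>\<phi>\<in>Inj V n. ind (relabel \<phi> E) G) \<in> borel_measurable P"
    using relabel_Inj_edges fE by (intro borel_measurable_sum ind_meas) auto
  then show ?thesis unfolding FF Tn_def by simp
qed

lemma Tn_integrable: "F \<in> fgraphs \<Longrightarrow> integrable P (\<lambda>G. Tn n F G)"
  using Tn_meas Tn_bounds by (intro bounded_integrable[where B=1]) auto

lemma Tn_int:
  assumes exch: "exchangeable P" and F: "(V, E) \<in> fgraphs" and n: "card V \<le> n"
  shows "integral\<^sup>L P (\<lambda>G. Tn n (V, E) G) = z E"
proof -
  have fE: "finite E" "E \<subseteq> edges_on V" "finite V" using F fgraphsD fgraphs_finite_E by auto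
  have ne: "Inj V n \<noteq> {}" using Inj_nonempty fE n by blast
  have "integral\<^sup>L P (\<lambda>G. \<Sum>\<phi>\<in>Inj V n. ind (relabel \<phi> E) G) = (\<Sum>\<phi>\<in>Inj V n. integral\<^sup>L P (\<lambda>G. ind (relabel \<phi> E) G))"
    using relabel_Inj_edges fE
    by (intro Bochner_Integration.integral_sum bounded_integrable[where B=1] ind_meas) (auto simp: ind_def)
  also have "\<dots> = (\<Sum>\<phi>\<in>Inj V n. z E)"
  proof (intro sum.cong refl)
    fix \<phi> assume \<phi>: "\<phi> \<in> Inj V n"
    have "integral\<^sup>L P (\<lambda>G. ind (relabel \<phi> E) G) = z (relabel \<phi> E)"
      using relabel_Inj_edges[OF \<phi>] fE by (intro ind_int) auto
    also have "\<dots> = z E"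
      using exch_iso_z[OF exch iso_inj_image[OF F, of \<phi>]] \<phi> by (simp add: Inj_def)
    finally show "integral\<^sup>L P (\<lambda>G. ind (relabel \<phi> E) G) = z E" .
  qed
  finally show ?thesis using ne finite_Inj[OF fE(3)] by (simp add: Tn_def)
qed

lemma z_bounds: "0 \<le> z E" "z E \<le> 1"
  by (auto simp: z_def)

lemma z_diff: "\<bar>z A - z B\<bar> \<le> 1"
  using z_bounds[of A] z_bounds[of B] unfolding abs_le_iff by linarith

lemma c2_eq:
  assumes exch: "exchangeable P" and F: "(V, E) \<in> fgraphs"
    and \<phi>: "\<phi> \<in> Inj V n" and \<psi>: "\<psi> \<in> Inj V m" and disj: "\<phi> ` V \<inter> \<psi> ` V = {}"
  shows "z (relabel \<phi> E \<union> relabel \<psi> E) = z (c2 V E)"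
proof -
  define K where "K = Suc (\<Sum>V)"
  have fV: "finite V" using F fgraphsD by blast
  have i1: "((V, E), (\<phi> ` V, relabel \<phi> E)) \<in> iso_rel"
    using iso_inj_image[OF F] \<phi> by (simp add: Inj_def)
  have i2a: "((V, E), ((+) K ` V, relabel ((+) K) E)) \<in> iso_rel"
    using iso_inj_image[OF F] by simp
  have i2b: "((V, E), (\<psi> ` V, relabel \<psi> E)) \<in> iso_rel"
    using iso_inj_image[OF F] \<psi> by (simp add: Inj_def)
  have i2: "(((+) K ` V, relabel ((+) K) E), (\<psi> ` V, relabel \<psi> E)) \<in> iso_rel"
    using iso_rel_trans[OF iso_rel_sym[OF i2a] i2b] .
  have d: "V \<inter> (+) K ` V = {}" using K_bound[OF fV] by (auto simp: K_def)
  have "((V \<union> (+) K ` V, E \<union> relabel ((+) K) E), (\<phi> ` V \<union> \<psi> ` V, relabel \<phi> E \<union> relabel \<psi> E)) \<in> iso_rel"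
    using iso_union[OF i1 i2 d disj] .
  from exch_iso_z[OF exch this] show ?thesis by (simp add: c2_def K_def)
qed

lemma cross:
  assumes exch: "exchangeable P" and F: "(V, E) \<in> fgraphs"
    and n: "card V \<le> n" and m: "card V \<le> m" "0 < m"
  shows "\<bar>integral\<^sup>L P (\<lambda>G. Tn n (V, E) G * Tn m (V, E) G) - z (c2 V E)\<bar> \<le> real (card V)^2 / m"
proof -
  have fE: "finite E" "E \<subseteq> edges_on V" "finite V" using F fgraphsD fgraphs_finite_E by auto
  define S where "S = Inj V n \<times> Inj V m"
  define Ov where "Ov = {(\<phi>, \<psi>) \<in> S. \<phi> ` V \<inter> \<psi> ` V \<noteq> {}}"
  define t where "t = (\<lambda>(\<phi>, \<psi>). z (relabel \<phi> E \<union> relabel \<psi> E) - z (c2 V E))"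
  have finS: "finite S" using fE by (simp add: S_def finite_Inj)
  have Sne: "S \<noteq> {}" using Inj_nonempty fE n m by (simp add: S_def)
  have cS: "card S > 0" using finS Sne by (simp add: card_gt_0_iff)
  have relE: "finite (relabel (fst x) E \<union> relabel (snd x) E) \<and> relabel (fst x) E \<union> relabel (snd x) E \<subseteq> edges_on UNIV"
    if "x \<in> S" for x
  proof -
    have "fst x \<in> Inj V n" "snd x \<in> Inj V m" using that by (auto simp: S_def)
    then show ?thesis using relabel_Inj_edges[OF _ fE(2) fE(1)] by blast
  qed
  have prodeq: "Tn n (V, E) G * Tn m (V, E) G =
      (\<Sum>x\<in>S. ind (relabel (fst x) E \<union> relabel (snd x) E) G) / card S" for G
  proof -
    have "(\<Sum>\<phi>\<in>Inj V n. ind (relabel \<phi> E) G) * (\<Sum>\<psi>\<in>Inj V m. ind (relabel \<psi> E) G)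
       = (\<Sum>x\<in>S. ind (relabel (fst x) E \<union> relabel (snd x) E) G)"
      by (simp add: sum_product S_def sum.cartesian_product ind_Un split_def)
    moreover have "card S = card (Inj V n) * card (Inj V m)" by (simp add: S_def card_cartesian_product)
    ultimately show ?thesis by (simp add: Tn_def)
  qed
  have "integral\<^sup>L P (\<lambda>G. Tn n (V, E) G * Tn m (V, E) G)
     = integral\<^sup>L P (\<lambda>G. \<Sum>x\<in>S. ind (relabel (fst x) E \<union> relabel (snd x) E) G) / card S"
    unfolding prodeq by simp
  also have "integral\<^sup>L P (\<lambda>G. \<Sum>x\<in>S. ind (relabel (fst x) E \<union> relabel (snd x) E) G)
      = (\<Sum>x\<in>S. integral\<^sup>L P (\<lambda>G. ind (relabel (fst x) E \<union> relabel (snd x) E) G))"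
    using relE by (intro Bochner_Integration.integral_sum bounded_integrable[where B=1] ind_meas) (auto simp: ind_def)
  also have "\<dots> = (\<Sum>x\<in>S. z (relabel (fst x) E \<union> relabel (snd x) E))"
    using relE by (intro sum.cong refl ind_int) auto
  finally have I: "integral\<^sup>L P (\<lambda>G. Tn n (V, E) G * Tn m (V, E) G) =
     (\<Sum>x\<in>S. z (relabel (fst x) E \<union> relabel (snd x) E)) / card S" .
  have "(\<Sum>x\<in>S. z (relabel (fst x) E \<union> relabel (snd x) E)) / card S - z (c2 V E)
      = (\<Sum>x\<in>S. t x) / card S"
    using cS by (simp add: t_def split_def sum_subtractf field_simps)
  note eq1 = this
  have ab: "\<bar>\<Sum>x\<in>S. t x\<bar> \<le> card Ov"
  proof -
    have "\<bar>\<Sum>x\<in>S. t x\<bar> \<le> (\<Sum>x\<in>S. \<bar>t x\<bar>)" by (rule sum_abs)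
    also have "\<dots> = (\<Sum>x\<in>Ov. \<bar>t x\<bar>)"
    proof (rule sum.mono_neutral_right)
      show "finite S" by (rule finS)
      show "Ov \<subseteq> S" by (auto simp: Ov_def)
      show "\<forall>x\<in>S - Ov. \<bar>t x\<bar> = 0"
        using c2_eq[OF exch F] by (auto simp: Ov_def S_def t_def)
    qed
    also have "\<dots> \<le> (\<Sum>x\<in>Ov. 1)"
      using z_diff by (intro sum_mono) (auto simp: t_def split: prod.splits)
    finally show ?thesis by simp
  qed
  have cnt: "real (card Ov) * m \<le> real (card V)^2 * card S"
  proof -
    have OvS: "Ov = Sigma (Inj V n) (\<lambda>\<phi>. {\<psi> \<in> Inj V m. \<psi> ` V \<inter> \<phi> ` V \<noteq> {}})"
      by (auto simp: Ov_def S_def)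
    have "real (card Ov) = (\<Sum>\<phi>\<in>Inj V n. real (card {\<psi> \<in> Inj V m. \<psi> ` V \<inter> \<phi> ` V \<noteq> {}}))"
      unfolding OvS using fE
      by (subst card_SigmaI) (auto simp: finite_Inj intro: finite_subset[OF _ finite_Inj[OF fE(3)]])
    then have "real (card Ov) * m = (\<Sum>\<phi>\<in>Inj V n. real (card {\<psi> \<in> Inj V m. \<psi> ` V \<inter> \<phi> ` V \<noteq> {}}) * m)"
      by (simp add: sum_distrib_right)
    also have "\<dots> \<le> (\<Sum>\<phi>\<in>Inj V n. real (card V) * real (card V) * real (card (Inj V m)))"
    proof (rule sum_mono)
      fix \<phi> assume "\<phi> \<in> Inj V n"
      then have "card (\<phi> ` V) = card V" by (simp add: Inj_def card_image)
      then show "real (card {\<psi> \<in> Inj V m. \<psi> ` V \<inter> \<phi> ` V \<noteq> {}}) * m \<le> real (card V) * real (card V) * real (card (Inj V m))"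
        using overlap_card[OF fE(3), of "\<phi> ` V" m] fE by simp
    qed
    also have "\<dots> = real (card V)^2 * card S"
      by (simp add: S_def card_cartesian_product power2_eq_square)
    finally show ?thesis .
  qed
  have "\<bar>integral\<^sup>L P (\<lambda>G. Tn n (V, E) G * Tn m (V, E) G) - z (c2 V E)\<bar> = \<bar>\<Sum>x\<in>S. t x\<bar> / card S"
    unfolding I eq1 by (simp add: abs_divide)
  also have "\<dots> \<le> card Ov / card S" using ab cS by (intro divide_right_mono) auto
  also have "\<dots> \<le> real (card V)^2 / m"
    using cnt cS m by (simp add: field_simps)
  finally show ?thesis .
qed

end


lemma amgm_abs:
  fixes a d :: real
  assumes "0 < a"
  shows "\<bar>d\<bar> \<le> (a * d\<^sup>2 + 1 / a) / 2"
proof -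
  have "0 \<le> (a * \<bar>d\<bar> - 1)\<^sup>2" by simp
  then have "2 * a * \<bar>d\<bar> \<le> a * a * d\<^sup>2 + 1"
    by (simp add: power2_eq_square algebra_simps abs_mult_self_eq)
  then have "2 * a * \<bar>d\<bar> / a \<le> (a * a * d\<^sup>2 + 1) / a"
    using assms by (intro divide_right_mono) auto
  then show ?thesis using assms by (simp add: field_simps)
qed

lemma sq01:
  fixes a b :: real
  assumes "0 \<le> a" "a \<le> 1" "0 \<le> b" "b \<le> 1"
  shows "(a - b)\<^sup>2 \<le> 1"
proof -
  have "\<bar>a - b\<bar> \<le> 1" using assms by linarith
  then have "\<bar>a - b\<bar> ^ 2 \<le> 1" by (intro power_le_one) auto
  then show ?thesis by simp
qed

context rg
begin

lemma L2:
  assumes exch: "exchangeable P" and F: "(V, E) \<in> fgraphs" and n: "0 < n" and m: "0 < m"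
  shows "integral\<^sup>L P (\<lambda>G. (Tn n (V, E) G - Tn m (V, E) G)\<^sup>2) \<le> 4 * (real (card V) + 1)\<^sup>2 / min n m"
proof -
  define k where "k = card V"
  define a where "a = (\<lambda>G. Tn n (V, E) G)"
  define b where "b = (\<lambda>G. Tn m (V, E) G)"
  have ma: "a \<in> borel_measurable P" "b \<in> borel_measurable P"
    using Tn_meas[OF F] by (auto simp: a_def b_def)
  have ba: "0 \<le> a G" "a G \<le> 1" "0 \<le> b G" "b G \<le> 1" for G
    using Tn_bounds by (auto simp: a_def b_def)
  have int: "integrable P (\<lambda>G. f (a G) (b G))"
    if "(\<lambda>G. f (a G) (b G)) \<in> borel_measurable P" "\<And>x y. 0 \<le> x \<Longrightarrow> x \<le> 1 \<Longrightarrow> 0 \<le> y \<Longrightarrow> y \<le> 1 \<Longrightarrow> \<bar>f x y\<bar> \<le> 1"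
    for f :: "real \<Rightarrow> real \<Rightarrow> real"
    using that ba by (intro bounded_integrable[where B=1]) auto
  have iaa: "integrable P (\<lambda>G. a G * a G)" and iab: "integrable P (\<lambda>G. a G * b G)"
    and ibb: "integrable P (\<lambda>G. b G * b G)"
    using ma ba by (auto intro!: bounded_integrable[where B=1] simp: abs_mult mult_le_one)
  show ?thesis
  proof (cases "k \<le> min n m")
    case True
    have e: "(\<lambda>G. (a G - b G)\<^sup>2) = (\<lambda>G. (a G * a G + b G * b G) - 2 * (a G * b G))"
      by (simp add: power2_eq_square algebra_simps)
    have "integral\<^sup>L P (\<lambda>G. (a G - b G)\<^sup>2) =
        integral\<^sup>L P (\<lambda>G. a G * a G) + integral\<^sup>L P (\<lambda>G. b G * b G) - 2 * integral\<^sup>L P (\<lambda>G. a G * b G)"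
      unfolding e using iaa iab ibb by simp
    moreover have "\<bar>integral\<^sup>L P (\<lambda>G. a G * a G) - z (c2 V E)\<bar> \<le> real k ^ 2 / n"
      using cross[OF exch F, of n n] True n by (simp add: a_def k_def)
    moreover have "\<bar>integral\<^sup>L P (\<lambda>G. b G * b G) - z (c2 V E)\<bar> \<le> real k ^ 2 / m"
      using cross[OF exch F, of m m] True m by (simp add: b_def k_def)
    moreover have "\<bar>integral\<^sup>L P (\<lambda>G. a G * b G) - z (c2 V E)\<bar> \<le> real k ^ 2 / m"
      using cross[OF exch F, of n m] True m by (simp add: a_def b_def k_def)
    moreover have "real k ^ 2 / n \<le> real k ^ 2 / min n m" "real k ^ 2 / m \<le> real k ^ 2 / min n m"
      using n m by (auto intro!: divide_left_mono simp: min_def)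
    moreover have "real k ^ 2 / min n m \<le> (real k + 1)\<^sup>2 / min n m"
      using n m by (intro divide_right_mono power_mono) auto
    ultimately have "integral\<^sup>L P (\<lambda>G. (a G - b G)\<^sup>2) \<le> 4 * ((real k + 1)\<^sup>2 / min n m)"
      unfolding abs_le_iff by linarith
    then show ?thesis by (simp add: a_def b_def k_def)
  next
    case False
    have "integral\<^sup>L P (\<lambda>G. (a G - b G)\<^sup>2) \<le> integral\<^sup>L P (\<lambda>G. 1)"
    proof (rule integral_mono)
      show "integrable P (\<lambda>G. (a G - b G)\<^sup>2)"
        using ma ba sq01 by (intro bounded_integrable[where B=1]) auto
      show "integrable P (\<lambda>G. 1::real)" by simp
      fix G show "(a G - b G)\<^sup>2 \<le> 1"
        using ba[of G] sq01 by blast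
    qed
    also have "\<dots> = 1" by (simp add: prob_space)
    also have "1 \<le> 4 * (real k + 1)\<^sup>2 / min n m"
    proof -
      have "real (min n m) \<le> real k" using False by (simp add: min_def split: if_splits)
      also have "\<dots> \<le> 4 * (real k + 1)\<^sup>2" by (simp add: power2_eq_square algebra_simps)
      finally show ?thesis using n m by (simp add: field_simps)
    qed
    finally show ?thesis by (simp add: a_def b_def k_def)
  qed
qed

end


context rg
begin

lemma AS:
  assumes exch: "exchangeable P" and F: "(V, E) \<in> fgraphs"
  shows "AE G in P. convergent (\<lambda>j. Tn (16^j) (V, E) G)"
proof -
  define C where "C = 4 * (real (card V) + 1)\<^sup>2"
  define D where "D j G = Tn (16^Suc j) (V, E) G - Tn (16^j) (V, E) G" for j G
  define f where "f j G = ennreal (2^j * (D j G)\<^sup>2)" for j G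
  have C0: "0 \<le> C" by (simp add: C_def)
  have mD: "(\<lambda>G. D j G) \<in> borel_measurable P" for j
    using Tn_meas[OF F] unfolding D_def by measurable
  have mf: "f j \<in> borel_measurable P" for j
    using mD unfolding f_def by measurable
  have ID: "integral\<^sup>L P (\<lambda>G. (D j G)\<^sup>2) \<le> C / 16^j" for j
  proof -
    have "integral\<^sup>L P (\<lambda>G. (D j G)\<^sup>2) \<le> C / real (min (16^Suc j) (16^j))"
      unfolding D_def C_def by (rule L2[OF exch F]) auto
    moreover have "min (16^Suc j) (16^j :: nat) = 16^j" by (simp add: min_def)
    ultimately show ?thesis by simp
  qed
  have Dsq: "(D j G)\<^sup>2 \<le> 1" for j G unfolding D_def by (intro sq01 Tn_bounds)
  have iD: "integrable P (\<lambda>G. 2^j * (D j G)\<^sup>2)" for j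
    using mD Dsq by (intro bounded_integrable[where B="2^j"]) (auto intro: mult_left_le)
  have nnf: "integral\<^sup>N P (f j) = ennreal (2^j * integral\<^sup>L P (\<lambda>G. (D j G)\<^sup>2))" for j
    unfolding f_def using nn_integral_eq_integral[OF iD] by simp
  have le: "integral\<^sup>N P (f j) \<le> ennreal (C * (1/8)^j)" for j
  proof -
    have "2^j * integral\<^sup>L P (\<lambda>G. (D j G)\<^sup>2) \<le> 2^j * (C / 16^j)"
      using ID by (intro mult_left_mono) auto
    also have "\<dots> = C * (1/8)^j"
      by (simp add: field_simps power_mult_distrib[symmetric] flip: power_mult_distrib)
    finally show ?thesis unfolding nnf by (rule ennreal_leI)
  qed
  have sg: "summable (\<lambda>j. C * (1/8::real)^j)" by (intro summable_mult summable_geometric) auto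
  have "(\<integral>\<^sup>+ G. (\<Sum>j. f j G) \<partial>P) = (\<Sum>j. integral\<^sup>N P (f j))"
    by (rule nn_integral_suminf[OF mf])
  also have "\<dots> \<le> (\<Sum>j. ennreal (C * (1/8)^j))"
    using le by (intro suminf_le) auto
  also have "\<dots> = ennreal (\<Sum>j. C * (1/8)^j)"
    using sg C0 by (intro suminf_ennreal2) auto
  also have "\<dots> < \<infinity>" by simp
  finally have fin: "(\<integral>\<^sup>+ G. (\<Sum>j. f j G) \<partial>P) \<noteq> \<infinity>" by simp
  have "AE G in P. (\<Sum>j. f j G) \<noteq> \<infinity>"
    by (rule nn_integral_PInf_AE[OF _ fin]) (use mf in measurable)
  then show ?thesis
  proof (rule AE_mp, intro AE_I2 impI)
    fix G assume "(\<Sum>j. f j G) \<noteq> \<infinity>"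
    then have s1: "summable (\<lambda>j. 2^j * (D j G)\<^sup>2)"
      unfolding f_def by (intro summable_suminf_not_top) auto
    have s2: "summable (\<lambda>j. (2^j * (D j G)\<^sup>2 + (1/2)^j) / 2)"
      using s1 by (intro summable_divide summable_add summable_geometric) auto
    have "summable (\<lambda>j. \<bar>D j G\<bar>)"
    proof (rule summable_comparison_test[OF _ s2], intro exI allI impI)
      fix j :: nat
      have "\<bar>D j G\<bar> \<le> (2^j * (D j G)\<^sup>2 + 1 / 2^j) / 2" by (rule amgm_abs) simp
      then show "norm \<bar>D j G\<bar> \<le> (2^j * (D j G)\<^sup>2 + (1/2)^j) / 2" by (simp add: power_one_over)
    qed
    then have "summable (\<lambda>j. D j G)" by (rule summable_rabs_cancel)
    then have "convergent (\<lambda>j. \<Sum>i<j. D i G)"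
      by (simp add: summable_iff_convergent)
    moreover have "(\<Sum>i<j. D i G) = Tn (16^j) (V, E) G - Tn (16^0) (V, E) G" for j
      unfolding D_def by (rule sum_lessThan_telescope)
    ultimately have "convergent (\<lambda>j. Tn (16^j) (V, E) G - Tn 1 (V, E) G)" by simp
    then have "convergent (\<lambda>j. (Tn (16^j) (V, E) G - Tn 1 (V, E) G) + Tn 1 (V, E) G)"
      by (intro convergent_add convergent_const)
    then show "convergent (\<lambda>j. Tn (16^j) (V, E) G)" by simp
  qed
qed

end


definition cyl :: "(nat set \<times> nat set set) set \<Rightarrow> real set \<Rightarrow> ((nat set \<times> nat set set) set \<Rightarrow> real) set" where
  "cyl s U = {\<rho> \<in> Uhat. \<rho> s \<in> U}"

definition Gens :: "((nat set \<times> nat set set) set \<Rightarrow> real) set set" where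
  "Gens = {cyl s U | s U. s \<in> Ucl \<and> open U}"

lemma Uhat_PiE: "Uhat \<subseteq> Ucl \<rightarrow>\<^sub>E UNIV"
  by (auto simp: Uhat_def)

lemma topspace_Uhat: "topspace Uhat_top = Uhat"
  using Uhat_PiE by (auto simp: Uhat_top_def topspace_product_topology)

lemma Gens_Pow: "Gens \<subseteq> Pow Uhat"
  by (auto simp: Gens_def cyl_def)

lemma open_cyl:
  assumes "s \<in> Ucl" "open U"
  shows "openin Uhat_top (cyl s U)"
proof -
  have "continuous_map (product_topology (\<lambda>_. euclideanreal) Ucl) euclideanreal (\<lambda>\<rho>. \<rho> s)"
    using assms(1) by (rule continuous_map_product_projection)
  then have "continuous_map Uhat_top euclideanreal (\<lambda>\<rho>. \<rho> s)"
    unfolding Uhat_top_def by (rule continuous_map_from_subtopology)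
  then have "openin Uhat_top {\<rho> \<in> topspace Uhat_top. \<rho> s \<in> U}"
    using assms(2) by (intro openin_continuous_map_preimage) auto
  then show ?thesis by (simp add: topspace_Uhat cyl_def)
qed

lemma rat_interval:
  fixes x :: real
  assumes "open V" "x \<in> V"
  shows "\<exists>a b. a \<in> \<rat> \<and> b \<in> \<rat> \<and> a < x \<and> x < b \<and> {a<..<b} \<subseteq> V"
proof -
  obtain e where e: "e > 0" "ball x e \<subseteq> V" using assms openE by blast
  obtain a where a: "a \<in> \<rat>" "x - e < a" "a < x" using Rats_dense_in_real[of "x - e" x] e by auto
  obtain b where b: "b \<in> \<rat>" "x < b" "b < x + e" using Rats_dense_in_real[of x "x + e"] e by auto
  have "{a<..<b} \<subseteq> ball x e" using a b by (auto simp: dist_real_def)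
  then show ?thesis using a b e by blast
qed

definition Box :: "((nat set \<times> nat set set) set \<times> real \<times> real) set \<Rightarrow> ((nat set \<times> nat set set) set \<Rightarrow> real) set" where
  "Box K = {\<rho> \<in> Uhat. \<forall>(s, a, b)\<in>K. a < \<rho> s \<and> \<rho> s < b}"

lemma Box_sigma:
  assumes "finite K" "K \<subseteq> Ucl \<times> UNIV"
  shows "Box K \<in> sigma_sets Uhat Gens"
  using assms
proof (induction K rule: finite_induct)
  case empty
  have "Box {} = Uhat" by (simp add: Box_def)
  then show ?case by (simp add: sigma_sets_top)
next
  case (insert x K)
  obtain s a b where x: "x = (s, a, b)" by (cases x) auto
  interpret sigma_algebra Uhat "sigma_sets Uhat Gens" using Gens_Pow by (rule sigma_algebra_sigma_sets)
  have "Box (insert x K) = Box K \<inter> cyl s {a<..<b}" by (auto simp: Box_def cyl_def x)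
  moreover have "cyl s {a<..<b} \<in> Gens"
    unfolding Gens_def using insert.prems x by (auto intro!: exI[of _ s] exI[of _ "{a<..<b}"])
  then have "cyl s {a<..<b} \<in> sigma_sets Uhat Gens" by (rule sigma_sets.Basic)
  ultimately show ?case using insert by auto
qed

lemma open_in_sigma:
  assumes "openin Uhat_top U"
  shows "U \<in> sigma_sets Uhat Gens"
proof -
  obtain T where T: "openin (product_topology (\<lambda>_. euclideanreal) Ucl) T" "U = T \<inter> Uhat"
    using assms by (auto simp: Uhat_top_def openin_subtopology)
  define Idx where "Idx = {K. finite K \<and> K \<subseteq> Ucl \<times> ((\<rat> :: real set) \<times> (\<rat> :: real set))}"
  have cI: "countable Idx" unfolding Idx_def
    by (intro countable_Collect_finite_subset countable_SIGMA countable_Ucl countable_rat)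
  have U_eq: "U = \<Union>(Box ` {K \<in> Idx. Box K \<subseteq> U})"
  proof
    show "\<Union>(Box ` {K \<in> Idx. Box K \<subseteq> U}) \<subseteq> U" by auto
    show "U \<subseteq> \<Union>(Box ` {K \<in> Idx. Box K \<subseteq> U})"
    proof
      fix \<rho> assume \<rho>: "\<rho> \<in> U"
      then obtain X where X: "\<rho> \<in> (\<Pi>\<^sub>E i\<in>Ucl. X i)" "\<And>i. open (X i)"
        "finite {i. X i \<noteq> UNIV}" "(\<Pi>\<^sub>E i\<in>Ucl. X i) \<subseteq> T"
        using product_topology_open_contains_basis[OF T(1), of \<rho>] T(2) by auto
      define J where "J = {i \<in> Ucl. X i \<noteq> UNIV}"
      have fJ: "finite J" using X(3) by (auto simp: J_def intro: finite_subset)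
      have "\<forall>i\<in>J. \<exists>ab. fst ab \<in> \<rat> \<and> snd ab \<in> \<rat> \<and> fst ab < \<rho> i \<and> \<rho> i < snd ab \<and> {fst ab<..<snd ab} \<subseteq> X i"
      proof
        fix i assume "i \<in> J"
        then have "\<rho> i \<in> X i" using X(1) by (auto simp: J_def)
        then show "\<exists>ab. fst ab \<in> \<rat> \<and> snd ab \<in> \<rat> \<and> fst ab < \<rho> i \<and> \<rho> i < snd ab \<and> {fst ab<..<snd ab} \<subseteq> X i"
          using rat_interval[OF X(2)] by fastforce
      qed
      then obtain ab where ab: "\<And>i. i \<in> J \<Longrightarrow> fst (ab i) \<in> \<rat> \<and> snd (ab i) \<in> \<rat> \<and> fst (ab i) < \<rho> i \<and> \<rho> i < snd (ab i) \<and> {fst (ab i)<..<snd (ab i)} \<subseteq> X i"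
        by metis
      define K where "K = (\<lambda>i. (i, fst (ab i), snd (ab i))) ` J"
      have KI: "K \<in> Idx" unfolding Idx_def K_def
      proof (intro CollectI conjI)
        show "finite ((\<lambda>i. (i, fst (ab i), snd (ab i))) ` J)" using fJ by simp
        show "(\<lambda>i. (i, fst (ab i), snd (ab i))) ` J \<subseteq> Ucl \<times> ((\<rat> :: real set) \<times> (\<rat> :: real set))"
        proof (rule image_subsetI)
          fix i assume i: "i \<in> J"
          then show "(i, fst (ab i), snd (ab i)) \<in> Ucl \<times> ((\<rat> :: real set) \<times> (\<rat> :: real set))"
            using ab[OF i] i by (simp add: mem_Times_iff J_def)
        qed
      qed
      have \<rho>U: "\<rho> \<in> Uhat" using \<rho> T(2) by auto
      have "\<rho> \<in> Box K" unfolding Box_def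
      proof (intro CollectI conjI ballI)
        show "\<rho> \<in> Uhat" by (rule \<rho>U)
        fix x assume "x \<in> K"
        then obtain i where i: "i \<in> J" "x = (i, fst (ab i), snd (ab i))" by (auto simp: K_def)
        then show "case x of (s, a, b) \<Rightarrow> a < \<rho> s \<and> \<rho> s < b" using ab[OF i(1)] by (simp add: case_prod_beta)
      qed
      moreover have "Box K \<subseteq> U"
      proof
        fix \<sigma> assume \<sigma>: "\<sigma> \<in> Box K"
        then have \<sigma>U: "\<sigma> \<in> Uhat" by (simp add: Box_def)
        have "\<sigma> \<in> (\<Pi>\<^sub>E i\<in>Ucl. X i)"
        proof (rule PiE_I)
          fix i assume i: "i \<in> Ucl"
          show "\<sigma> i \<in> X i"
          proof (cases "i \<in> J")
            case True
            then have "(i, fst (ab i), snd (ab i)) \<in> K" by (simp add: K_def)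
            then have "fst (ab i) < \<sigma> i \<and> \<sigma> i < snd (ab i)" using \<sigma> unfolding Box_def by fastforce
            then show ?thesis using ab[OF True] by auto
          next
            case False
            then show ?thesis using i by (auto simp: J_def)
          qed
        next
          fix i assume "i \<notin> Ucl"
          then show "\<sigma> i = undefined" using \<sigma>U Uhat_PiE by (auto simp: PiE_def extensional_def)
        qed
        then show "\<sigma> \<in> U" using X(4) T(2) \<sigma>U by auto
      qed
      ultimately show "\<rho> \<in> \<Union>(Box ` {K \<in> Idx. Box K \<subseteq> U})" using KI by blast
    qed
  qed
  have "\<Union>(Box ` {K \<in> Idx. Box K \<subseteq> U}) \<in> sigma_sets Uhat Gens"
  proof (rule sigma_sets_UNION)
    show "countable (Box ` {K \<in> Idx. Box K \<subseteq> U})" using cI by auto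
    show "\<And>b. b \<in> Box ` {K \<in> Idx. Box K \<subseteq> U} \<Longrightarrow> b \<in> sigma_sets Uhat Gens"
      by (auto simp: Idx_def intro!: Box_sigma)
  qed
  then show ?thesis using U_eq by simp
qed

lemma sets_borel_Uhat: "sets (borel_of Uhat_top) = sigma_sets Uhat Gens"
proof -
  have op: "{U. openin Uhat_top U} \<subseteq> Pow Uhat" using openin_subset topspace_Uhat by auto
  have "sets (borel_of Uhat_top) = sigma_sets Uhat {U. openin Uhat_top U}"
    unfolding borel_of_def topspace_Uhat using op by (simp add: sets_measure_of_conv)
  also have "\<dots> = sigma_sets Uhat Gens"
  proof
    show "sigma_sets Uhat {U. openin Uhat_top U} \<subseteq> sigma_sets Uhat Gens"
      using open_in_sigma by (intro sigma_sets_mono) auto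
    show "sigma_sets Uhat Gens \<subseteq> sigma_sets Uhat {U. openin Uhat_top U}"
      using open_cyl by (intro sigma_sets_mono') (auto simp: Gens_def)
  qed
  finally show ?thesis .
qed

lemma space_borel_Uhat: "space (borel_of Uhat_top) = Uhat"
proof -
  have op: "{U. openin Uhat_top U} \<subseteq> Pow Uhat" using openin_subset topspace_Uhat by auto
  then show ?thesis unfolding borel_of_def topspace_Uhat by (simp add: space_measure_of_conv)
qed

lemma cyl_sets: "s \<in> Ucl \<Longrightarrow> open U \<Longrightarrow> cyl s U \<in> sets (borel_of Uhat_top)"
  unfolding sets_borel_Uhat by (auto simp: Gens_def intro!: sigma_sets.Basic)

lemma coord_meas: "s \<in> Ucl \<Longrightarrow> (\<lambda>\<rho>. \<rho> s) \<in> borel_measurable (borel_of Uhat_top)"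
proof (rule borel_measurableI)
  fix S :: "real set" assume "s \<in> Ucl" "open S"
  moreover have "(\<lambda>\<rho>. \<rho> s) -` S \<inter> space (borel_of Uhat_top) = cyl s S"
    by (auto simp: space_borel_Uhat cyl_def)
  ultimately show "(\<lambda>\<rho>. \<rho> s) -` S \<inter> space (borel_of Uhat_top) \<in> sets (borel_of Uhat_top)"
    using cyl_sets by simp
qed

lemma meas_into_Uhat:
  assumes "f \<in> space M \<rightarrow> Uhat" "\<And>s. s \<in> Ucl \<Longrightarrow> (\<lambda>x. f x s) \<in> borel_measurable M"
  shows "f \<in> measurable M (borel_of Uhat_top)"
proof -
  have "f \<in> measurable M (measure_of Uhat Gens (\<lambda>_. 0))"
  proof (rule measurable_measure_of[OF Gens_Pow assms(1)])
    fix y assume "y \<in> Gens"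
    then obtain s U where y: "y = cyl s U" "s \<in> Ucl" "open U" by (auto simp: Gens_def)
    have "f -` y \<inter> space M = (\<lambda>x. f x s) -` U \<inter> space M"
      using assms(1) by (auto simp: y cyl_def)
    also have "\<dots> \<in> sets M" using measurable_sets[OF assms(2)[OF y(2)] borel_open[OF y(3)]] .
    finally show "f -` y \<inter> space M \<in> sets M" .
  qed
  moreover have "sets (measure_of Uhat Gens (\<lambda>_. 0)) = sets (borel_of Uhat_top)"
    using Gens_Pow by (simp add: sets_borel_Uhat sets_measure_of_conv)
  ultimately show ?thesis using measurable_cong_sets by blast
qed


lemma UhatD:
  assumes "\<rho> \<in> Uhat"
  shows "\<rho> empty_class = 1" "\<And>s t. s \<in> Ucl \<Longrightarrow> t \<in> Ucl \<Longrightarrow> \<rho> (uplus s t) = \<rho> s * \<rho> t"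
    "\<exists>B. \<forall>s\<in>Ucl. \<bar>\<rho> s\<bar> \<le> B" "\<rho> \<in> Ucl \<rightarrow>\<^sub>E UNIV"
  using assms by (auto simp: Uhat_def is_character_def)

definition pw :: "(nat set \<times> nat set set) set \<Rightarrow> nat \<Rightarrow> (nat set \<times> nat set set) set" where
  "pw s k = (uplus s ^^ k) empty_class"

lemma pw_Ucl: "s \<in> Ucl \<Longrightarrow> pw s k \<in> Ucl"
  by (induction k) (auto simp: pw_def empty_class_in_Ucl uplus_in_Ucl)

lemma char_pw: "\<rho> \<in> Uhat \<Longrightarrow> s \<in> Ucl \<Longrightarrow> \<rho> (pw s k) = \<rho> s ^ k"
proof (induction k)
  case 0 then show ?case using UhatD(1) by (simp add: pw_def)
next
  case (Suc k)
  have "\<rho> (pw s (Suc k)) = \<rho> (uplus s (pw s k))" by (simp add: pw_def)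
  also have "\<dots> = \<rho> s * \<rho> (pw s k)" using UhatD(2)[OF Suc.prems(1) Suc.prems(2) pw_Ucl[OF Suc.prems(2)]] .
  finally show ?case using Suc by simp
qed

lemma char_bound:
  assumes "\<rho> \<in> Uhat" "s \<in> Ucl"
  shows "\<bar>\<rho> s\<bar> \<le> 1"
proof (rule ccontr)
  assume "\<not> \<bar>\<rho> s\<bar> \<le> 1"
  then have gt: "1 < \<bar>\<rho> s\<bar>" by simp
  obtain B where B: "\<forall>t\<in>Ucl. \<bar>\<rho> t\<bar> \<le> B" using UhatD(3)[OF assms(1)] by blast
  obtain k where "B < \<bar>\<rho> s\<bar> ^ k" using real_arch_pow[OF gt] by blast
  moreover have "\<bar>\<rho> s\<bar> ^ k = \<bar>\<rho> (pw s k)\<bar>" using char_pw[OF assms] by (simp add: power_abs)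
  moreover have "\<bar>\<rho> (pw s k)\<bar> \<le> B" using B pw_Ucl[OF assms(2)] by blast
  ultimately show False by simp
qed

lemma one_Uhat: "(\<lambda>s\<in>Ucl. 1::real) \<in> Uhat"
  unfolding Uhat_def is_character_def
  by (auto simp: empty_class_in_Ucl uplus_in_Ucl intro: exI[of _ 1])

definition linrep :: "(real \<times> (nat set \<times> nat set set) set) list \<Rightarrow> (((nat set \<times> nat set set) set \<Rightarrow> real) \<Rightarrow> real) \<Rightarrow> bool" where
  "linrep xs f \<longleftrightarrow> (\<forall>p\<in>set xs. snd p \<in> Ucl) \<and> (\<forall>\<rho>\<in>Uhat. f \<rho> = (\<Sum>p\<leftarrow>xs. fst p * \<rho> (snd p)))"

definition Lc :: "(((nat set \<times> nat set set) set \<Rightarrow> real) \<Rightarrow> real) \<Rightarrow> bool" where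
  "Lc f \<longleftrightarrow> (\<exists>xs. linrep xs f)"

lemma Lc_cong: "Lc f \<Longrightarrow> (\<And>\<rho>. \<rho> \<in> Uhat \<Longrightarrow> f \<rho> = g \<rho>) \<Longrightarrow> Lc g"
  by (auto simp: Lc_def linrep_def)

lemma Lc_const: "Lc (\<lambda>\<rho>. c)"
  unfolding Lc_def linrep_def
  by (intro exI[of _ "[(c, empty_class)]"]) (auto simp: empty_class_in_Ucl UhatD(1))

lemma Lc_coord: "s \<in> Ucl \<Longrightarrow> Lc (\<lambda>\<rho>. \<rho> s)"
  unfolding Lc_def linrep_def by (intro exI[of _ "[(1, s)]"]) auto

lemma Lc_add: "Lc f \<Longrightarrow> Lc g \<Longrightarrow> Lc (\<lambda>\<rho>. f \<rho> + g \<rho>)"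
proof -
  assume "Lc f" "Lc g"
  then obtain xs ys where xs: "linrep xs f" and ys: "linrep ys g" by (auto simp: Lc_def)
  have "linrep (xs @ ys) (\<lambda>\<rho>. f \<rho> + g \<rho>)" using xs ys by (auto simp: linrep_def)
  then show ?thesis by (auto simp: Lc_def)
qed

lemma sum_list_mult_sum_list:
  fixes f g :: "'a \<Rightarrow> real"
  shows "(\<Sum>p\<leftarrow>xs. f p) * (\<Sum>q\<leftarrow>ys. g q) = sum_list (concat (map (\<lambda>p. map (\<lambda>q. f p * g q) ys) xs))"
  by (induction xs) (auto simp: algebra_simps sum_list_const_mult)

lemma Lc_mult: "Lc f \<Longrightarrow> Lc g \<Longrightarrow> Lc (\<lambda>\<rho>. f \<rho> * g \<rho>)"
proof -
  assume "Lc f" "Lc g"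
  then obtain xs ys where xs: "linrep xs f" and ys: "linrep ys g" by (auto simp: Lc_def)
  define zs where "zs = concat (map (\<lambda>p. map (\<lambda>q. (fst p * fst q, uplus (snd p) (snd q))) ys) xs)"
  have "linrep zs (\<lambda>\<rho>. f \<rho> * g \<rho>)"
    unfolding linrep_def
  proof (intro conjI ballI)
    fix z assume "z \<in> set zs"
    then obtain p q where "p \<in> set xs" "q \<in> set ys" "z = (fst p * fst q, uplus (snd p) (snd q))"
      by (auto simp: zs_def)
    then show "snd z \<in> Ucl" using xs ys by (auto simp: linrep_def intro!: uplus_in_Ucl)
  next
    fix \<rho> assume \<rho>: "\<rho> \<in> Uhat"
    have "f \<rho> * g \<rho> = (\<Sum>p\<leftarrow>xs. fst p * \<rho> (snd p)) * (\<Sum>q\<leftarrow>ys. fst q * \<rho> (snd q))"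
      using xs ys \<rho> by (simp add: linrep_def)
    also have "\<dots> = sum_list (concat (map (\<lambda>p. map (\<lambda>q. (fst p * \<rho> (snd p)) * (fst q * \<rho> (snd q))) ys) xs))"
      by (rule sum_list_mult_sum_list)
    also have "\<dots> = (\<Sum>z\<leftarrow>zs. fst z * \<rho> (snd z))"
    proof -
      have "map (\<lambda>p. map (\<lambda>q. (fst p * \<rho> (snd p)) * (fst q * \<rho> (snd q))) ys) xs
          = map (\<lambda>p. map (\<lambda>z. fst z * \<rho> (snd z)) (map (\<lambda>q. (fst p * fst q, uplus (snd p) (snd q))) ys)) xs"
      proof (rule map_cong[OF refl])
        fix p assume p: "p \<in> set xs"
        show "map (\<lambda>q. (fst p * \<rho> (snd p)) * (fst q * \<rho> (snd q))) ys
           = map (\<lambda>z. fst z * \<rho> (snd z)) (map (\<lambda>q. (fst p * fst q, uplus (snd p) (snd q))) ys)"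
          unfolding map_map comp_def
        proof (rule map_cong[OF refl])
          fix q assume q: "q \<in> set ys"
          have "snd p \<in> Ucl" "snd q \<in> Ucl" using p q xs ys by (auto simp: linrep_def)
          then show "(fst p * \<rho> (snd p)) * (fst q * \<rho> (snd q))
             = fst (fst p * fst q, uplus (snd p) (snd q)) * \<rho> (snd (fst p * fst q, uplus (snd p) (snd q)))"
            using UhatD(2)[OF \<rho>] by simp
        qed
      qed
      then have A: "sum_list (concat (map (\<lambda>p. map (\<lambda>q. (fst p * \<rho> (snd p)) * (fst q * \<rho> (snd q))) ys) xs))
          = sum_list (concat (map (\<lambda>p. map (\<lambda>z. fst z * \<rho> (snd z)) (map (\<lambda>q. (fst p * fst q, uplus (snd p) (snd q))) ys)) xs))"
        by (rule arg_cong)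
      have B: "sum_list (concat (map (\<lambda>p. map (\<lambda>z. fst z * \<rho> (snd z)) (map (\<lambda>q. (fst p * fst q, uplus (snd p) (snd q))) ys)) xs))
          = (\<Sum>z\<leftarrow>zs. fst z * \<rho> (snd z))"
        by (simp add: zs_def map_concat comp_def)
      show ?thesis using A B by (rule trans)
    qed
    finally show "f \<rho> * g \<rho> = (\<Sum>z\<leftarrow>zs. fst z * \<rho> (snd z))" .
  qed
  then show ?thesis by (auto simp: Lc_def)
qed

lemma Lc_sum: "finite I \<Longrightarrow> (\<And>i. i \<in> I \<Longrightarrow> Lc (f i)) \<Longrightarrow> Lc (\<lambda>\<rho>. \<Sum>i\<in>I. f i \<rho>)"
  by (induction I rule: finite_induct) (auto intro: Lc_add Lc_const)

lemma Lc_prod: "finite I \<Longrightarrow> (\<And>i. i \<in> I \<Longrightarrow> Lc (f i)) \<Longrightarrow> Lc (\<lambda>\<rho>. \<Prod>i\<in>I. f i \<rho>)"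
  by (induction I rule: finite_induct) (auto intro: Lc_mult Lc_const)

lemma Lc_pow: "Lc f \<Longrightarrow> Lc (\<lambda>\<rho>. f \<rho> ^ k)"
  by (induction k) (auto intro: Lc_mult Lc_const)


locale umeas =
  fixes M :: "((nat set \<times> nat set set) set \<Rightarrow> real) measure"
  assumes probM: "prob_space M" and setsM: "sets M = sets (borel_of Uhat_top)"
begin

sublocale prob_space M by (rule probM)

lemma spaceM: "space M = Uhat"
  using sets_eq_imp_space_eq[OF setsM] space_borel_Uhat by simp

lemma measM: "f \<in> borel_measurable M \<longleftrightarrow> f \<in> borel_measurable (borel_of Uhat_top)"
  using measurable_cong_sets[OF setsM refl] by blast

lemma coordM: "s \<in> Ucl \<Longrightarrow> (\<lambda>\<rho>. \<rho> s) \<in> borel_measurable M"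
  using coord_meas measM by blast

lemma coord_integrable: "s \<in> Ucl \<Longrightarrow> integrable M (\<lambda>\<rho>. \<rho> s)"
  by (rule integrable_const_bound[where B=1]) (auto simp: spaceM char_bound coordM intro!: AE_I2)

lemma int_sum_list:
  assumes "\<forall>p\<in>set xs. snd p \<in> Ucl"
  shows "integrable M (\<lambda>\<rho>. \<Sum>p\<leftarrow>xs. fst p * \<rho> (snd p)) \<and>
         integral\<^sup>L M (\<lambda>\<rho>. \<Sum>p\<leftarrow>xs. fst p * \<rho> (snd p)) = (\<Sum>p\<leftarrow>xs. fst p * integral\<^sup>L M (\<lambda>\<rho>. \<rho> (snd p)))"
  using assms
proof (induction xs)
  case Nil then show ?case by simp
next
  case (Cons a xs)
  have ia: "integrable M (\<lambda>\<rho>. fst a * \<rho> (snd a))" using Cons.prems coord_integrable by simp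
  from Cons have IH: "integrable M (\<lambda>\<rho>. \<Sum>p\<leftarrow>xs. fst p * \<rho> (snd p))"
    "integral\<^sup>L M (\<lambda>\<rho>. \<Sum>p\<leftarrow>xs. fst p * \<rho> (snd p)) = (\<Sum>p\<leftarrow>xs. fst p * integral\<^sup>L M (\<lambda>\<rho>. \<rho> (snd p)))"
    by auto
  show ?case using ia IH by simp
qed

lemma int_linrep:
  assumes "linrep xs f"
  shows "integral\<^sup>L M f = (\<Sum>p\<leftarrow>xs. fst p * integral\<^sup>L M (\<lambda>\<rho>. \<rho> (snd p)))"
proof -
  have "integral\<^sup>L M f = integral\<^sup>L M (\<lambda>\<rho>. \<Sum>p\<leftarrow>xs. fst p * \<rho> (snd p))"
    using assms by (intro Bochner_Integration.integral_cong) (auto simp: spaceM linrep_def)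
  then show ?thesis using int_sum_list assms by (simp add: linrep_def)
qed

end

lemma Lc_int_eq:
  assumes "umeas M" "umeas N" "\<forall>s\<in>Ucl. integral\<^sup>L M (\<lambda>\<rho>. \<rho> s) = integral\<^sup>L N (\<lambda>\<rho>. \<rho> s)" "Lc f"
  shows "integral\<^sup>L M f = integral\<^sup>L N f"
proof -
  obtain xs where xs: "linrep xs f" using assms(4) by (auto simp: Lc_def)
  have "integral\<^sup>L M f = (\<Sum>p\<leftarrow>xs. fst p * integral\<^sup>L M (\<lambda>\<rho>. \<rho> (snd p)))"
    using umeas.int_linrep[OF assms(1) xs] .
  also have "\<dots> = (\<Sum>p\<leftarrow>xs. fst p * integral\<^sup>L N (\<lambda>\<rho>. \<rho> (snd p)))"
    using xs assms(3) by (intro arg_cong[where f=sum_list] map_cong) (auto simp: linrep_def)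
  also have "\<dots> = integral\<^sup>L N f" using umeas.int_linrep[OF assms(2) xs] by simp
  finally show ?thesis .
qed

definition Bapp :: "(real \<Rightarrow> real) \<Rightarrow> nat \<Rightarrow> real \<Rightarrow> real" where
  "Bapp h N x = (\<Sum>k\<le>N. h (2 * (real k / real N) - 1) * Bernstein N k ((x + 1) / 2))"

lemma Lc_Bapp: "s \<in> Ucl \<Longrightarrow> Lc (\<lambda>\<rho>. Bapp h N (\<rho> s))"
proof -
  assume s: "s \<in> Ucl"
  have y: "Lc (\<lambda>\<rho>. (\<rho> s + 1) / 2)"
  proof -
    have "Lc (\<lambda>\<rho>. (1/2) * \<rho> s + 1/2)" by (intro Lc_add Lc_mult Lc_const Lc_coord s)
    then show ?thesis by (rule Lc_cong) (simp add: field_simps)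
  qed
  have y1: "Lc (\<lambda>\<rho>. 1 - (\<rho> s + 1) / 2)"
  proof -
    have "Lc (\<lambda>\<rho>. 1 + (-1) * ((\<rho> s + 1) / 2))" by (intro Lc_add Lc_mult Lc_const y)
    then show ?thesis by (rule Lc_cong) (simp add: field_simps)
  qed
  show ?thesis unfolding Bapp_def Bernstein_def
    by (intro Lc_sum Lc_mult Lc_const Lc_pow y y1) auto
qed

lemma Bapp_conv:
  assumes "continuous_on UNIV h" "\<bar>x\<bar> \<le> 1"
  shows "(\<lambda>N. Bapp h N x) \<longlonglongrightarrow> h x"
proof -
  define g where "g y = h (2 * y - 1)" for y
  have cg: "continuous_on {0..1} g" unfolding g_def
    by (intro continuous_on_compose2[OF assms(1)] continuous_intros) auto
  define y where "y = (x + 1) / 2"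
  have y01: "y \<in> {0..1}" using assms(2) by (auto simp: y_def abs_le_iff)
  have "2 * y - 1 = x" by (simp add: y_def field_simps)
  then have gy: "g y = h x" by (simp add: g_def)
  have B: "Bapp h N x = (\<Sum>k\<le>N. g (real k / real N) * Bernstein N k y)" for N
    by (simp add: Bapp_def g_def y_def)
  show ?thesis unfolding LIMSEQ_iff
  proof (intro allI impI)
    fix r :: real assume "0 < r"
    from Bernstein_Weierstrass[OF cg this] obtain N0 where
      N0: "\<And>n x. N0 \<le> n \<and> x \<in> {0..1} \<longrightarrow> \<bar>g x - (\<Sum>k\<le>n. g (real k / real n) * Bernstein n k x)\<bar> < r"
      by blast
    show "\<exists>no. \<forall>n\<ge>no. norm (Bapp h n x - h x) < r"
    proof (intro exI allI impI)
      fix n assume "N0 \<le> n"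
      then have "\<bar>g y - (\<Sum>k\<le>n. g (real k / real n) * Bernstein n k y)\<bar> < r" using N0 y01 by blast
      then show "norm (Bapp h n x - h x) < r" by (simp add: B gy abs_minus_commute)
    qed
  qed
qed

lemma Bapp_bound:
  assumes "\<And>x. \<bar>x\<bar> \<le> 1 \<Longrightarrow> \<bar>h x\<bar> \<le> 1" "\<bar>x\<bar> \<le> 1"
  shows "\<bar>Bapp h N x\<bar> \<le> 1"
proof -
  define y where "y = (x + 1) / 2"
  have y01: "0 \<le> y" "y \<le> 1" using assms(2) by (auto simp: y_def abs_le_iff)
  have "\<bar>Bapp h N x\<bar> \<le> (\<Sum>k\<le>N. \<bar>h (2 * (real k / real N) - 1) * Bernstein N k y\<bar>)"
    unfolding Bapp_def y_def by (rule sum_abs)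
  also have "\<dots> \<le> (\<Sum>k\<le>N. Bernstein N k y)"
  proof (rule sum_mono)
    fix k assume k: "k \<in> {..N}"
    have "0 \<le> real k / real N" "real k / real N \<le> 1" using k by (auto simp: divide_le_eq_1)
    then have "\<bar>2 * (real k / real N) - 1\<bar> \<le> 1" by (auto simp: abs_le_iff)
    then have "\<bar>h (2 * (real k / real N) - 1)\<bar> \<le> 1" by (rule assms(1))
    moreover have "0 \<le> Bernstein N k y" using y01 by (rule Bernstein_nonneg)
    ultimately show "\<bar>h (2 * (real k / real N) - 1) * Bernstein N k y\<bar> \<le> Bernstein N k y"
      by (simp add: abs_mult mult_left_le_one_le)
  qed
  also have "\<dots> = 1" by simp
  finally show ?thesis .
qed


lemma prod_abs_le1:
  fixes f :: "'a \<Rightarrow> real"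
  assumes "\<And>i. i \<in> J \<Longrightarrow> \<bar>f i\<bar> \<le> 1"
  shows "\<bar>\<Prod>i\<in>J. f i\<bar> \<le> 1"
  unfolding abs_prod using assms by (intro prod_le_1) auto

lemma continuous_Bapp: "continuous_on UNIV (Bapp h N)"
  unfolding Bapp_def Bernstein_def by (intro continuous_intros) auto

context umeas
begin

lemma prod_conv:
  assumes J: "finite J" "J \<subseteq> Ucl" and h: "\<And>s. s \<in> J \<Longrightarrow> continuous_on UNIV (h s)"
    and hb: "\<And>s x. s \<in> J \<Longrightarrow> \<bar>x\<bar> \<le> 1 \<Longrightarrow> \<bar>h s x\<bar> \<le> 1"
  shows "(\<lambda>N. integral\<^sup>L M (\<lambda>\<rho>. \<Prod>s\<in>J. Bapp (h s) N (\<rho> s))) \<longlonglongrightarrow> integral\<^sup>L M (\<lambda>\<rho>. \<Prod>s\<in>J. h s (\<rho> s))"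
proof (rule integral_dominated_convergence[where w="\<lambda>_. 1"])
  show "(\<lambda>\<rho>. \<Prod>s\<in>J. h s (\<rho> s)) \<in> borel_measurable M"
  proof (rule borel_measurable_prod)
    fix s assume s: "s \<in> J"
    show "(\<lambda>\<rho>. h s (\<rho> s)) \<in> borel_measurable M"
      by (rule borel_measurable_continuous_on[OF h[OF s] coordM]) (use s J in auto)
  qed
  show "(\<lambda>\<rho>. \<Prod>s\<in>J. Bapp (h s) N (\<rho> s)) \<in> borel_measurable M" for N
  proof (rule borel_measurable_prod)
    fix s assume s: "s \<in> J"
    show "(\<lambda>\<rho>. Bapp (h s) N (\<rho> s)) \<in> borel_measurable M"
      by (rule borel_measurable_continuous_on[OF continuous_Bapp coordM]) (use s J in auto)
  qed
  show "integrable M (\<lambda>_. 1::real)" by simp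
  show "AE \<rho> in M. (\<lambda>N. \<Prod>s\<in>J. Bapp (h s) N (\<rho> s)) \<longlonglongrightarrow> (\<Prod>s\<in>J. h s (\<rho> s))"
  proof (rule AE_I2)
    fix \<rho> assume "\<rho> \<in> space M"
    then have \<rho>: "\<rho> \<in> Uhat" by (simp add: spaceM)
    show "(\<lambda>N. \<Prod>s\<in>J. Bapp (h s) N (\<rho> s)) \<longlonglongrightarrow> (\<Prod>s\<in>J. h s (\<rho> s))"
      using J h char_bound[OF \<rho>] by (intro tendsto_prod Bapp_conv) auto
  qed
  show "AE \<rho> in M. norm (\<Prod>s\<in>J. Bapp (h s) N (\<rho> s)) \<le> 1" for N
  proof (rule AE_I2)
    fix \<rho> assume "\<rho> \<in> space M"
    then have \<rho>: "\<rho> \<in> Uhat" by (simp add: spaceM)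
    show "norm (\<Prod>s\<in>J. Bapp (h s) N (\<rho> s)) \<le> 1"
      using J hb char_bound[OF \<rho>] by (simp only: real_norm_def) (intro prod_abs_le1 Bapp_bound, auto)
  qed
qed

end

lemma prod_int_eq:
  fixes h :: "(nat set \<times> nat set set) set \<Rightarrow> real \<Rightarrow> real"
  assumes MN: "umeas M" "umeas N" and mom: "\<forall>s\<in>Ucl. integral\<^sup>L M (\<lambda>\<rho>. \<rho> s) = integral\<^sup>L N (\<lambda>\<rho>. \<rho> s)"
    and J: "finite J" "J \<subseteq> Ucl" and h: "\<And>s. s \<in> J \<Longrightarrow> continuous_on UNIV (h s)"
    and hb: "\<And>s x. s \<in> J \<Longrightarrow> \<bar>x\<bar> \<le> 1 \<Longrightarrow> \<bar>h s x\<bar> \<le> 1"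
  shows "integral\<^sup>L M (\<lambda>\<rho>. \<Prod>s\<in>J. h s (\<rho> s)) = integral\<^sup>L N (\<lambda>\<rho>. \<Prod>s\<in>J. h s (\<rho> s))"
proof -
  have eq: "integral\<^sup>L M (\<lambda>\<rho>. \<Prod>s\<in>J. Bapp (h s) n (\<rho> s)) = integral\<^sup>L N (\<lambda>\<rho>. \<Prod>s\<in>J. Bapp (h s) n (\<rho> s))" for n
    using J by (intro Lc_int_eq[OF MN mom] Lc_prod Lc_Bapp) auto
  have "(\<lambda>n. integral\<^sup>L M (\<lambda>\<rho>. \<Prod>s\<in>J. Bapp (h s) n (\<rho> s))) \<longlonglongrightarrow> integral\<^sup>L M (\<lambda>\<rho>. \<Prod>s\<in>J. h s (\<rho> s))"
    by (rule umeas.prod_conv[OF MN(1) J h hb])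
  moreover have "(\<lambda>n. integral\<^sup>L M (\<lambda>\<rho>. \<Prod>s\<in>J. Bapp (h s) n (\<rho> s))) \<longlonglongrightarrow> integral\<^sup>L N (\<lambda>\<rho>. \<Prod>s\<in>J. h s (\<rho> s))"
    unfolding eq by (rule umeas.prod_conv[OF MN(2) J h hb])
  ultimately show ?thesis by (rule LIMSEQ_unique)
qed

definition hh :: "nat \<Rightarrow> real set \<Rightarrow> real \<Rightarrow> real" where
  "hh n V x = (if V = UNIV then 1 else min 1 (real n * infdist x (- V)))"

lemma hh_cont: "continuous_on UNIV (hh n V)"
  unfolding hh_def by (cases "V = UNIV") (auto intro!: continuous_intros)

lemma hh_bounds: "0 \<le> hh n V x" "hh n V x \<le> 1"
  by (auto simp: hh_def infdist_nonneg)

lemma hh_conv: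
  assumes "open V"
  shows "(\<lambda>n. hh n V x) \<longlonglongrightarrow> indicator V x"
proof (cases "V = UNIV")
  case True then show ?thesis by (simp add: hh_def)
next
  case False
  show ?thesis
  proof (cases "x \<in> V")
    case True
    have "closed (- V)" using assms by auto
    moreover have "x \<notin> - V" using True by simp
    moreover have "- V \<noteq> {}" using False by auto
    ultimately have d: "infdist x (- V) > 0" using infdist_pos_not_in_closed by blast
    obtain n0 :: nat where n0: "1 / infdist x (- V) < n0" using reals_Archimedean2 by blast
    have "eventually (\<lambda>n. hh n V x = 1) sequentially"
    proof (rule eventually_sequentiallyI[of n0])
      fix n assume "n0 \<le> n"
      then have "1 / infdist x (- V) < real n" using n0 by linarith
      then have "1 \<le> real n * infdist x (- V)" using d by (simp add: field_simps)
      then show "hh n V x = 1" using False by (simp add: hh_def)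
    qed
    then show ?thesis using True by (simp add: tendsto_cong)
  next
    case xn: False
    then have "hh n V x = 0" for n using False by (simp add: hh_def)
    then show ?thesis using xn by simp
  qed
qed

lemma prod_indicator:
  assumes "finite J"
  shows "(\<Prod>s\<in>J. indicator (U s) (\<rho> s) :: real) = indicator {\<rho>. \<forall>s\<in>J. \<rho> s \<in> U s} \<rho>"
proof (cases "\<forall>s\<in>J. \<rho> s \<in> U s")
  case True then show ?thesis by simp
next
  case False
  then obtain s where "s \<in> J" "\<rho> s \<notin> U s" by blast
  then have "\<exists>a\<in>J. (indicator (U a) (\<rho> a) :: real) = 0" by (auto simp: indicator_def)
  then have "(\<Prod>s\<in>J. indicator (U s) (\<rho> s) :: real) = 0"
    by (rule prod_zero[OF assms])
  then show ?thesis using False by simp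
qed

context umeas
begin

lemma box_conv:
  assumes J: "finite J" "J \<subseteq> Ucl" and U: "\<And>s. s \<in> J \<Longrightarrow> open (U s)"
  shows "(\<lambda>n. integral\<^sup>L M (\<lambda>\<rho>. \<Prod>s\<in>J. hh n (U s) (\<rho> s))) \<longlonglongrightarrow> measure M {\<rho> \<in> Uhat. \<forall>s\<in>J. \<rho> s \<in> U s}"
proof -
  have mi: "(\<lambda>\<rho>. indicator (U s) (\<rho> s) :: real) \<in> borel_measurable M" if "s \<in> J" for s
  proof -
    have "indicator (U s) \<in> borel_measurable (borel :: real measure)"
      using U[OF that] by (intro borel_measurable_indicator) auto
    then show ?thesis using coordM that J(2) measurable_comp[of "\<lambda>\<rho>. \<rho> s" M borel "indicator (U s)" borel]
      by (auto simp: comp_def)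
  qed
  have "(\<lambda>n. integral\<^sup>L M (\<lambda>\<rho>. \<Prod>s\<in>J. hh n (U s) (\<rho> s))) \<longlonglongrightarrow> integral\<^sup>L M (\<lambda>\<rho>. \<Prod>s\<in>J. indicator (U s) (\<rho> s))"
  proof (rule integral_dominated_convergence[where w="\<lambda>_. 1"])
    show "(\<lambda>\<rho>. \<Prod>s\<in>J. indicator (U s) (\<rho> s) :: real) \<in> borel_measurable M"
      using mi by (rule borel_measurable_prod)
    show "(\<lambda>\<rho>. \<Prod>s\<in>J. hh n (U s) (\<rho> s)) \<in> borel_measurable M" for n
    proof (rule borel_measurable_prod)
      fix s assume s: "s \<in> J"
      show "(\<lambda>\<rho>. hh n (U s) (\<rho> s)) \<in> borel_measurable M"
        by (rule borel_measurable_continuous_on[OF hh_cont coordM]) (use s J in auto)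
    qed
    show "integrable M (\<lambda>_. 1::real)" by simp
    show "AE \<rho> in M. (\<lambda>n. \<Prod>s\<in>J. hh n (U s) (\<rho> s)) \<longlonglongrightarrow> (\<Prod>s\<in>J. indicator (U s) (\<rho> s))"
      using U by (intro AE_I2 tendsto_prod hh_conv) auto
    show "AE \<rho> in M. norm (\<Prod>s\<in>J. hh n (U s) (\<rho> s)) \<le> 1" for n
    proof (rule AE_I2)
      fix \<rho> show "norm (\<Prod>s\<in>J. hh n (U s) (\<rho> s)) \<le> 1"
        unfolding real_norm_def by (rule prod_abs_le1) (metis abs_of_nonneg hh_bounds)
    qed
  qed
  moreover have "integral\<^sup>L M (\<lambda>\<rho>. \<Prod>s\<in>J. indicator (U s) (\<rho> s)) = measure M {\<rho> \<in> Uhat. \<forall>s\<in>J. \<rho> s \<in> U s}"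
  proof -
    have "integral\<^sup>L M (\<lambda>\<rho>. \<Prod>s\<in>J. indicator (U s) (\<rho> s)) = (integral\<^sup>L M (indicator {\<rho>. \<forall>s\<in>J. \<rho> s \<in> U s}) :: real)"
      by (rule arg_cong[where f="integral\<^sup>L M"]) (rule ext, rule prod_indicator[OF J(1)])
    also have "\<dots> = measure M ({\<rho>. \<forall>s\<in>J. \<rho> s \<in> U s} \<inter> space M)"
      by (rule Bochner_Integration.integral_indicator)
    also have "{\<rho>. \<forall>s\<in>J. \<rho> s \<in> U s} \<inter> space M = {\<rho> \<in> Uhat. \<forall>s\<in>J. \<rho> s \<in> U s}"
      by (auto simp: spaceM)
    finally show ?thesis .
  qed
  ultimately show ?thesis by simp
qed

end

lemma box_eq:
  assumes MN: "umeas M" "umeas N" and mom: "\<forall>s\<in>Ucl. integral\<^sup>L M (\<lambda>\<rho>. \<rho> s) = integral\<^sup>L N (\<lambda>\<rho>. \<rho> s)"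
    and J: "finite J" "J \<subseteq> Ucl" and U: "\<And>s. s \<in> J \<Longrightarrow> open (U s)"
  shows "measure M {\<rho> \<in> Uhat. \<forall>s\<in>J. \<rho> s \<in> U s} = measure N {\<rho> \<in> Uhat. \<forall>s\<in>J. \<rho> s \<in> U s}"
proof -
  have eq: "integral\<^sup>L M (\<lambda>\<rho>. \<Prod>s\<in>J. hh n (U s) (\<rho> s)) = integral\<^sup>L N (\<lambda>\<rho>. \<Prod>s\<in>J. hh n (U s) (\<rho> s))" for n
    using hh_cont hh_bounds by (intro prod_int_eq[OF MN mom J]) (auto simp: abs_le_iff intro: order.trans[OF _ hh_bounds(1)])
  have "(\<lambda>n. integral\<^sup>L M (\<lambda>\<rho>. \<Prod>s\<in>J. hh n (U s) (\<rho> s))) \<longlonglongrightarrow> measure M {\<rho> \<in> Uhat. \<forall>s\<in>J. \<rho> s \<in> U s}"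
    by (rule umeas.box_conv[OF MN(1) J U])
  moreover have "(\<lambda>n. integral\<^sup>L M (\<lambda>\<rho>. \<Prod>s\<in>J. hh n (U s) (\<rho> s))) \<longlonglongrightarrow> measure N {\<rho> \<in> Uhat. \<forall>s\<in>J. \<rho> s \<in> U s}"
    unfolding eq by (rule umeas.box_conv[OF MN(2) J U])
  ultimately show ?thesis by (rule LIMSEQ_unique)
qed


lemma E_sigma:
  assumes "finite J" "J \<subseteq> Ucl" "\<forall>s\<in>J. open (U s)"
  shows "{\<rho> \<in> Uhat. \<forall>s\<in>J. \<rho> s \<in> U s} \<in> sigma_sets Uhat Gens"
  using assms
proof (induction J rule: finite_induct)
  case empty
  then show ?case by (simp add: sigma_sets_top)
next
  case (insert a J)
  interpret sigma_algebra Uhat "sigma_sets Uhat Gens" using Gens_Pow by (rule sigma_algebra_sigma_sets)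
  have "{\<rho> \<in> Uhat. \<forall>s\<in>insert a J. \<rho> s \<in> U s} = {\<rho> \<in> Uhat. \<forall>s\<in>J. \<rho> s \<in> U s} \<inter> cyl a (U a)"
    by (auto simp: cyl_def)
  moreover have "cyl a (U a) \<in> Gens" using insert.prems unfolding Gens_def by auto
  then have "cyl a (U a) \<in> sigma_sets Uhat Gens" by (rule sigma_sets.Basic)
  ultimately show ?case using insert by auto
qed

lemma uniqueness:
  assumes MN: "umeas M" "umeas N" and mom: "\<forall>s\<in>Ucl. integral\<^sup>L M (\<lambda>\<rho>. \<rho> s) = integral\<^sup>L N (\<lambda>\<rho>. \<rho> s)"
  shows "M = N"
proof -
  define E where "E = {{\<rho> \<in> Uhat. \<forall>s\<in>J. \<rho> s \<in> U s} | J U. finite J \<and> J \<subseteq> Ucl \<and> (\<forall>s\<in>J. open (U s))}"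
  have IS: "Int_stable E"
    unfolding Int_stable_def
  proof (intro ballI)
    fix a b assume "a \<in> E" "b \<in> E"
    then obtain J1 U1 J2 U2 where a: "a = {\<rho> \<in> Uhat. \<forall>s\<in>J1. \<rho> s \<in> U1 s}" "finite J1" "J1 \<subseteq> Ucl" "\<forall>s\<in>J1. open (U1 s)"
      and b: "b = {\<rho> \<in> Uhat. \<forall>s\<in>J2. \<rho> s \<in> U2 s}" "finite J2" "J2 \<subseteq> Ucl" "\<forall>s\<in>J2. open (U2 s)"
      unfolding E_def by blast
    define U where "U s = (if s \<in> J1 then U1 s else UNIV) \<inter> (if s \<in> J2 then U2 s else UNIV)" for s
    have key: "\<rho> s \<in> U s \<longleftrightarrow> (s \<in> J1 \<longrightarrow> \<rho> s \<in> U1 s) \<and> (s \<in> J2 \<longrightarrow> \<rho> s \<in> U2 s)" for \<rho> :: "(nat set \<times> nat set set) set \<Rightarrow> real" and s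
      by (simp add: U_def)
    have eq: "a \<inter> b = {\<rho> \<in> Uhat. \<forall>s\<in>J1 \<union> J2. \<rho> s \<in> U s}" unfolding a(1) b(1) key by blast
    have op: "\<forall>s\<in>J1 \<union> J2. open (U s)" using a(4) b(4) unfolding U_def by (intro ballI open_Int) auto
    show "a \<inter> b \<in> E" unfolding E_def
      by (intro CollectI exI[of _ "J1 \<union> J2"] exI[of _ U] conjI eq op) (use a(2,3) b(2,3) in auto)
  qed
  have EP: "E \<subseteq> Pow Uhat" by (auto simp: E_def)
  have sE: "sigma_sets Uhat Gens = sigma_sets Uhat E"
  proof
    show "sigma_sets Uhat Gens \<subseteq> sigma_sets Uhat E"
    proof (rule sigma_sets_mono')
      show "Gens \<subseteq> E"
      proof
        fix x assume "x \<in> Gens"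
        then obtain s U where x: "x = cyl s U" "s \<in> Ucl" "open U" by (auto simp: Gens_def)
        then have "x = {\<rho> \<in> Uhat. \<forall>s'\<in>{s}. \<rho> s' \<in> (\<lambda>_. U) s'}" by (auto simp: cyl_def)
        then show "x \<in> E" unfolding E_def
          by (intro CollectI exI[of _ "{s}"] exI[of _ "\<lambda>_. U"] conjI) (use x in auto)
      qed
    qed
    show "sigma_sets Uhat E \<subseteq> sigma_sets Uhat Gens"
      by (rule sigma_sets_mono) (auto simp: E_def intro!: E_sigma)
  qed
  have sets: "sets K = sigma_sets Uhat E" if "umeas K" for K
    using umeas.setsM[OF that] sets_borel_Uhat sE by simp
  have UE: "Uhat \<in> E" unfolding E_def by (intro CollectI exI[of _ "{}"]) auto
  show ?thesis
  proof (rule measure_eqI_generator_eq[OF IS EP _ sets[OF MN(1)] sets[OF MN(2)], where A="\<lambda>_. Uhat"])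
    fix X assume "X \<in> E"
    then obtain J U where X: "X = {\<rho> \<in> Uhat. \<forall>s\<in>J. \<rho> s \<in> U s}" "finite J" "J \<subseteq> Ucl" "\<forall>s\<in>J. open (U s)"
      unfolding E_def by blast
    have "measure M X = measure N X" unfolding X(1) using X(2-4) by (intro box_eq[OF MN mom]) auto
    then show "emeasure M X = emeasure N X"
      using finite_measure.emeasure_eq_measure[OF prob_space.finite_measure[OF umeas.probM[OF MN(1)]]]
        finite_measure.emeasure_eq_measure[OF prob_space.finite_measure[OF umeas.probM[OF MN(2)]]] by simp
  next
    show "range (\<lambda>_. Uhat) \<subseteq> E" using UE by auto
    show "(\<Union>i::nat. Uhat) = Uhat" by simp
    show "emeasure M Uhat \<noteq> \<infinity>" for i :: nat
      using finite_measure.emeasure_eq_measure[OF prob_space.finite_measure[OF umeas.probM[OF MN(1)]]] by simp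
  qed
qed


definition rep :: "(nat set \<times> nat set set) set \<Rightarrow> nat set \<times> nat set set" where
  "rep s = (SOME F. F \<in> fgraphs \<and> s = iso_class F)"

lemma rep_props: "s \<in> Ucl \<Longrightarrow> rep s \<in> fgraphs \<and> s = iso_class (rep s)"
proof -
  assume s: "s \<in> Ucl"
  then have "\<exists>F. F \<in> fgraphs \<and> s = iso_class F" using Ucl_cases by blast
  then show ?thesis unfolding rep_def by (rule someI_ex)
qed

lemma rep_iso: "F \<in> fgraphs \<Longrightarrow> s = iso_class F \<Longrightarrow> (F, rep s) \<in> iso_rel"
  using rep_props[of s] iso_class_in_Ucl[of F] iso_class_eq_iff[of F "rep s"] by auto

definition seqv :: "(nat set \<times> nat set set) set \<Rightarrow> nat set set \<Rightarrow> nat \<Rightarrow> real" where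
  "seqv s G j = Tn (16^j) (rep s) G"

definition good :: "nat set set \<Rightarrow> bool" where
  "good G \<longleftrightarrow> (\<forall>s\<in>Ucl. convergent (seqv s G))"

definition chi :: "nat set set \<Rightarrow> (nat set \<times> nat set set) set \<Rightarrow> real" where
  "chi G = (if good G then (\<lambda>s\<in>Ucl. lim (seqv s G)) else (\<lambda>s\<in>Ucl. 1))"

lemma seqv_iso: "F \<in> fgraphs \<Longrightarrow> s = iso_class F \<Longrightarrow> seqv s G j = Tn (16^j) F G"
  unfolding seqv_def using Tn_iso[OF rep_iso] by metis

lemma lim_bounds:
  assumes "convergent (seqv s G)"
  shows "0 \<le> lim (seqv s G)" "lim (seqv s G) \<le> 1"
proof -
  have l: "seqv s G \<longlonglongrightarrow> lim (seqv s G)" using assms by (simp add: convergent_LIMSEQ_iff)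
  show "0 \<le> lim (seqv s G)" by (rule LIMSEQ_le_const[OF l]) (auto simp: seqv_def Tn_bounds)
  show "lim (seqv s G) \<le> 1" by (rule LIMSEQ_le_const2[OF l]) (auto simp: seqv_def Tn_bounds)
qed

lemma chi_Uhat: "chi G \<in> Uhat"
proof (cases "good G")
  case False then show ?thesis using one_Uhat by (simp add: chi_def)
next
  case True
  define L where "L s = lim (seqv s G)" for s
  have conv: "seqv s G \<longlonglongrightarrow> L s" if "s \<in> Ucl" for s
    using True that by (auto simp: good_def L_def convergent_LIMSEQ_iff)
  have chiL: "chi G = (\<lambda>s\<in>Ucl. L s)" using True by (simp add: chi_def L_def)
  have emp: "L empty_class = 1"
  proof -
    have "seqv empty_class G j = 1" for j
      using seqv_iso[of "({}, {})" empty_class G j] Tn_empty by (simp add: empty_class_def fgraphs_def)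
    then have "seqv empty_class G = (\<lambda>_. 1)" by (intro ext)
    then have "seqv empty_class G \<longlonglongrightarrow> 1" by simp
    then show ?thesis using conv[OF empty_class_in_Ucl] LIMSEQ_unique by blast
  qed
  have mult: "L (uplus s t) = L s * L t" if st: "s \<in> Ucl" "t \<in> Ucl" for s t
  proof -
    obtain F H where FH: "F \<in> fgraphs" "H \<in> fgraphs" "s = iso_class F" "t = iso_class H" "fst F \<inter> fst H = {}"
      using Ucl_disjoint_reps[OF st] by blast
    obtain V E W D where VE: "F = (V, E)" "H = (W, D)" by (cases F, cases H)
    have u: "uplus s t = iso_class (V \<union> W, E \<union> D)" using uplus_iso_class[OF FH(1,2,5)] FH VE by simp
    have fU: "(V \<union> W, E \<union> D) \<in> fgraphs" using fgraphs_union FH VE by simp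
    have sF: "seqv s G j = Tn (16^j) (V, E) G" for j using seqv_iso FH VE by simp
    have tH: "seqv t G j = Tn (16^j) (W, D) G" for j using seqv_iso FH VE by simp
    have uU: "seqv (uplus s t) G j = Tn (16^j) (V \<union> W, E \<union> D) G" for j using seqv_iso[OF fU u] by simp
    define c where "c = 2 * real (card V) * real (card W)"
    have ev: "eventually (\<lambda>j. norm (seqv s G j * seqv t G j - seqv (uplus s t) G j) \<le> c / 16^j) sequentially"
    proof -
      obtain j0 where j0: "card V + card W \<le> j0" by blast
      show ?thesis
      proof (rule eventually_sequentiallyI[of j0])
        fix j assume "j0 \<le> j"
        have "j < 16^j" by (induction j) auto
        then have "card V + card W \<le> 16^j" using j0 \<open>j0 \<le> j\<close> by linarith
        then show "norm (seqv s G j * seqv t G j - seqv (uplus s t) G j) \<le> c / 16^j"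
          unfolding sF tH uU c_def real_norm_def
          using Tn_mult[of V E W D "16^j" G] FH VE by simp
      qed
    qed
    have "(\<lambda>j. c / 16^j) \<longlonglongrightarrow> 0"
    proof -
      have "(\<lambda>j. c * (1/16::real)^j) \<longlonglongrightarrow> c * 0" by (intro tendsto_mult tendsto_const LIMSEQ_power_zero) auto
      moreover have "(\<lambda>j. c * (1/16::real)^j) = (\<lambda>j. c / 16^j)" by (rule ext) (simp add: power_one_over)
      ultimately show ?thesis by simp
    qed
    then have z: "(\<lambda>j. seqv s G j * seqv t G j - seqv (uplus s t) G j) \<longlonglongrightarrow> 0"
      using Lim_null_comparison[OF ev] by simp
    have "(\<lambda>j. seqv s G j * seqv t G j - (seqv s G j * seqv t G j - seqv (uplus s t) G j)) \<longlonglongrightarrow> L s * L t - 0"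
      by (intro tendsto_diff tendsto_mult conv st z)
    then have "seqv (uplus s t) G \<longlonglongrightarrow> L s * L t" by simp
    then show ?thesis using conv[OF uplus_in_Ucl[OF st]] LIMSEQ_unique by blast
  qed
  have bnd: "\<bar>L s\<bar> \<le> 1" if "s \<in> Ucl" for s
    using lim_bounds[of s G] True that by (auto simp: good_def L_def)
  show ?thesis unfolding chiL Uhat_def is_character_def
    using emp mult bnd empty_class_in_Ucl uplus_in_Ucl by (auto intro!: exI[of _ 1])
qed

locale rgx = rg +
  assumes exch: "exchangeable P"
begin

lemma AE_good: "AE G in P. good G"
proof -
  have "AE G in P. \<forall>s\<in>Ucl. convergent (seqv s G)"
  proof (rule AE_ball_countable')
    fix s assume "s \<in> Ucl"
    then have r: "rep s \<in> fgraphs" using rep_props by blast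
    obtain V E where VE: "rep s = (V, E)" by (cases "rep s")
    have "seqv s G = (\<lambda>j. Tn (16^j) (V, E) G)" for G by (rule ext) (simp add: seqv_def VE)
    then show "AE G in P. convergent (seqv s G)"
      using AS[OF exch r[unfolded VE]] by simp
  qed (rule countable_Ucl)
  then show ?thesis by (simp add: good_def)
qed

lemma seqv_meas: "s \<in> Ucl \<Longrightarrow> (\<lambda>G. seqv s G j) \<in> borel_measurable P"
  unfolding seqv_def using Tn_meas rep_props by blast

lemma good_sets: "{G \<in> space P. good G} \<in> sets P"
proof -
  have "{G \<in> space P. good G} = space P \<inter> (\<Inter>s\<in>Ucl. {G \<in> space P. convergent (\<lambda>j. seqv s G j)})"
    by (auto simp: good_def)
  also have "\<dots> \<in> sets P"
  proof (intro sets.Int sets.top sets.countable_INT' countable_Ucl)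
    show "Ucl \<noteq> {}" using empty_class_in_Ucl by blast
    show "(\<lambda>s. {G \<in> space P. convergent (\<lambda>j. seqv s G j)}) ` Ucl \<subseteq> sets P"
    proof (rule image_subsetI)
      fix s assume s: "s \<in> Ucl"
      have "{G \<in> space P. convergent (\<lambda>j. seqv s G j)} = {G \<in> space P. Cauchy (\<lambda>j. seqv s G j)}"
        by (simp add: Cauchy_convergent_iff)
      also have "\<dots> \<in> sets P"
        using sets_Collect_Cauchy[of "\<lambda>j G. seqv s G j" P] seqv_meas[OF s] by simp
      finally show "{G \<in> space P. convergent (\<lambda>j. seqv s G j)} \<in> sets P" .
    qed
  qed
  finally show ?thesis .
qed

lemma chi_meas: "chi \<in> measurable P (borel_of Uhat_top)"
proof (rule meas_into_Uhat)
  show "chi \<in> space P \<rightarrow> Uhat" using chi_Uhat by blast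
  fix s assume s: "s \<in> Ucl"
  have "(\<lambda>G. chi G s) = (\<lambda>G. if good G then lim (\<lambda>j. seqv s G j) else 1)"
    using s by (auto simp: chi_def fun_eq_iff)
  also have "\<dots> \<in> borel_measurable P"
    using seqv_meas[OF s] good_sets by (intro measurable_If borel_measurable_lim_metric) auto
  finally show "(\<lambda>G. chi G s) \<in> borel_measurable P" .
qed

definition mu0 :: "((nat set \<times> nat set set) set \<Rightarrow> real) measure" where
  "mu0 = distr P (borel_of Uhat_top) chi"

lemma mu0_prob: "prob_space mu0"
  unfolding mu0_def by (rule prob_space_distr[OF chi_meas])

lemma mu0_sets: "sets mu0 = sets (borel_of Uhat_top)"
  by (simp add: mu0_def)

lemma mu0_int:
  assumes F: "F \<in> fgraphs"
  shows "mobius_param P F = integral\<^sup>L mu0 (\<lambda>\<rho>. \<rho> (iso_class F))"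
proof -
  define s where "s = iso_class F"
  have s: "s \<in> Ucl" using iso_class_in_Ucl[OF F] by (simp add: s_def)
  obtain V E where VE: "rep s = (V, E)" by (cases "rep s")
  have r: "(V, E) \<in> fgraphs" using rep_props[OF s] VE by simp
  have "integral\<^sup>L mu0 (\<lambda>\<rho>. \<rho> s) = integral\<^sup>L P (\<lambda>G. chi G s)"
    unfolding mu0_def by (rule integral_distr[OF chi_meas coord_meas[OF s]])
  moreover have "(\<lambda>j. integral\<^sup>L P (\<lambda>G. seqv s G j)) \<longlonglongrightarrow> integral\<^sup>L P (\<lambda>G. chi G s)"
  proof (rule integral_dominated_convergence[where w="\<lambda>_. 1"])
    show "(\<lambda>G. chi G s) \<in> borel_measurable P"
      using measurable_comp[OF chi_meas coord_meas[OF s]] by (simp add: comp_def)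
    show "(\<lambda>G. seqv s G j) \<in> borel_measurable P" for j by (rule seqv_meas[OF s])
    show "integrable P (\<lambda>_. 1::real)" by simp
    show "AE G in P. (\<lambda>j. seqv s G j) \<longlonglongrightarrow> chi G s"
      using AE_good
    proof (rule AE_mp, intro AE_I2 impI)
      fix G assume "good G"
      then show "(\<lambda>j. seqv s G j) \<longlonglongrightarrow> chi G s"
        using s by (simp add: chi_def good_def convergent_LIMSEQ_iff)
    qed
    show "AE G in P. norm (seqv s G j) \<le> 1" for j
      using Tn_bounds by (intro AE_I2) (auto simp: seqv_def)
  qed
  moreover have "(\<lambda>j. integral\<^sup>L P (\<lambda>G. seqv s G j)) \<longlonglongrightarrow> z E"
  proof -
    obtain j0 :: nat where j0: "card V \<le> j0" by blast
    have "eventually (\<lambda>j. integral\<^sup>L P (\<lambda>G. seqv s G j) = z E) sequentially"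
    proof (rule eventually_sequentiallyI[of j0])
      fix j assume "j0 \<le> j"
      have "j < 16^j" by (induction j) auto
      then have "card V \<le> 16^j" using j0 \<open>j0 \<le> j\<close> by linarith
      then show "integral\<^sup>L P (\<lambda>G. seqv s G j) = z E"
        using Tn_int[OF exch r] by (simp add: seqv_def VE)
    qed
    then show ?thesis by (simp add: tendsto_cong)
  qed
  moreover have "z E = mobius_param P F"
  proof -
    have "(F, rep s) \<in> iso_rel" using rep_iso[OF F s_def] .
    then have "z (snd F) = z (snd (rep s))" by (rule exch_iso_z[OF exch])
    then show ?thesis by (simp add: mobius_z VE)
  qed
  ultimately show ?thesis using LIMSEQ_unique s_def by metis
qed

end


theorem corollary1:
  fixes P :: "nat set set measure"
  assumes "prob_space P" and "sets P = sets Linf_M"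
  shows "exchangeable P \<longleftrightarrow>
    (\<exists>!\<mu>. prob_space \<mu> \<and> sets \<mu> = sets (borel_of Uhat_top) \<and>
       (\<forall>F \<in> fgraphs. mobius_param P F = (\<integral>\<rho>. \<rho> (iso_class F) \<partial>\<mu>)))"
proof -
  interpret rg P using assms by (simp add: rg_def)
  show ?thesis
  proof
    assume ex: "exchangeable P"
    interpret rgx P using assms ex by (simp add: rgx_def rg_def rgx_axioms_def)
    show "\<exists>!\<mu>. prob_space \<mu> \<and> sets \<mu> = sets (borel_of Uhat_top) \<and>
       (\<forall>F \<in> fgraphs. mobius_param P F = (\<integral>\<rho>. \<rho> (iso_class F) \<partial>\<mu>))"
    proof (rule ex1I[of _ mu0])
      show "prob_space mu0 \<and> sets mu0 = sets (borel_of Uhat_top) \<and>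
          (\<forall>F \<in> fgraphs. mobius_param P F = (\<integral>\<rho>. \<rho> (iso_class F) \<partial>mu0))"
        using mu0_prob mu0_sets mu0_int by blast
    next
      fix \<mu> assume \<mu>: "prob_space \<mu> \<and> sets \<mu> = sets (borel_of Uhat_top) \<and>
          (\<forall>F \<in> fgraphs. mobius_param P F = (\<integral>\<rho>. \<rho> (iso_class F) \<partial>\<mu>))"
      have um: "umeas \<mu>" using \<mu> by (simp add: umeas_def)
      have u0: "umeas mu0" using mu0_prob mu0_sets by (simp add: umeas_def)
      have mom: "\<forall>s\<in>Ucl. integral\<^sup>L \<mu> (\<lambda>\<rho>. \<rho> s) = integral\<^sup>L mu0 (\<lambda>\<rho>. \<rho> s)"
      proof
        fix s assume "s \<in> Ucl"
        then obtain F where F: "F \<in> fgraphs" "s = iso_class F" using Ucl_cases by blast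
        show "integral\<^sup>L \<mu> (\<lambda>\<rho>. \<rho> s) = integral\<^sup>L mu0 (\<lambda>\<rho>. \<rho> s)"
          using \<mu> mu0_int[OF F(1)] F by auto
      qed
      show "\<mu> = mu0" by (rule uniqueness[OF um u0 mom])
    qed
  next
    assume "\<exists>!\<mu>. prob_space \<mu> \<and> sets \<mu> = sets (borel_of Uhat_top) \<and>
       (\<forall>F \<in> fgraphs. mobius_param P F = (\<integral>\<rho>. \<rho> (iso_class F) \<partial>\<mu>))"
    then obtain \<mu> where \<mu>: "\<forall>F \<in> fgraphs. mobius_param P F = (\<integral>\<rho>. \<rho> (iso_class F) \<partial>\<mu>)" by blast
    show "exchangeable P" unfolding exch_iff_z_perm
    proof (intro allI impI)
      fix n \<sigma> E assume \<sigma>: "\<sigma> permutes {0..<n}" and E: "E \<in> Ln n"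
      have F1: "({0..<n}, E) \<in> fgraphs" using E by (simp add: Ln_def fgraphs_def)
      have F2: "({0..<n}, relabel \<sigma> E) \<in> fgraphs" using relabel_Ln[OF \<sigma> E] by (simp add: Ln_def fgraphs_def)
      have "(({0..<n}, E), ({0..<n}, relabel \<sigma> E)) \<in> iso_rel"
        using F1 F2 permutes_imp_bij[OF \<sigma>] by (intro iso_relI) auto
      then have ic: "iso_class ({0..<n}, E) = iso_class ({0..<n}, relabel \<sigma> E)" by (rule iso_class_eq)
      have "z (relabel \<sigma> E) = mobius_param P ({0..<n}, relabel \<sigma> E)" by (simp add: mobius_z)
      also have "\<dots> = (\<integral>\<rho>. \<rho> (iso_class ({0..<n}, relabel \<sigma> E)) \<partial>\<mu>)" using \<mu> F2 by blast
      also have "\<dots> = (\<integral>\<rho>. \<rho> (iso_class ({0..<n}, E)) \<partial>\<mu>)" by (simp add: ic)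
      also have "\<dots> = mobius_param P ({0..<n}, E)" using \<mu> F1 by simp
      also have "\<dots> = z E" by (simp add: mobius_z)
      finally show "z (relabel \<sigma> E) = z E" .
    qed
  qed
qed


end
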